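(* Let $\Sigma$ be a complete fan in $N_{\mathbb R}$ and $\mathbb L=(L,\Sigma_L,\mu,\pi,\varphi)$ a tropical Lagrangian multi-section over $\Sigma$. Then there exists a separable tropical Lagrangian multi-section $\mathbb L_{sep}$ over $\Sigma$ such that $\mathbb L_{sep}\le\mathbb L$. In particular, every tropical Lagrangian multi-section is combinatorially equivalent to a separable one.
   Context: $N$ is a lattice of rank $n$, $M=\mathrm{Hom}(N,\mathbb Z)$, $N_{\mathbb R}=N\otimes\mathbb R$, $\Sigma(k)$ the $k$-dimensional cones of $\Sigma$. A cone complex is a topological space $X$ with a finite collection $\Sigma_X$ of closed subsets (cones) and for each cone $\sigma$ a finitely generated group $M(\sigma)$ of continuous real functions on $\sigma$ such that evaluation identifies $\sigma$ homeomorphically with a convex rational polyhedral cone in $(M(\sigma)\otimes\mathbb R)^\vee$, preimages of faces are cones with $M$ given by restriction, and $X$ is the disjoint union of the relative interiors of its cones. A morphism sends cones into cones and pulls back $M(\sigma)$ into $M(\sigma')$. A weight $\mu:X\to\mathbb Z_{>0}$ is constant on relative interiors; $\mathrm{Tr}_f(\mu)(x)=\sum_{x'\in f^{-1}(x)}\mu(x')$. A branched covering map $\pi:(L,\Sigma_L,\mu)\to(B,\Sigma_B)$ is a surjective morphism mapping each cone homeomorphically onto a cone and with $\mathrm{Tr}_{\pi|_V}(\mu)$ constant for every connected open $U\subset B$ and connected component $V$ of $\pi^{-1}(U)$. A tropical Lagrangian multi-section of rank $r$ over $\Sigma$ is $\mathbb L=(L,\Sigma_L,\mu,\pi,\varphi)$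 with $\pi:(L,\Sigma_L,\mu)\to(N_{\mathbb R},\Sigma)$ a branched covering with $\mathrm{Tr}_\pi(\mu)=r$ and $\varphi:L\to\mathbb R$ continuous with $\varphi|_{\sigma'}\in M(\sigma')$ for all cones $\sigma'$. It is connected if $L$ is. For tropical Lagrangian multi-sections $\mathbb L_1,\mathbb L_2$ of the same rank, $\mathbb L_1\le\mathbb L_2$ means there is a surjective morphism of cone complexes $f:L_2\to L_1$ with $\pi_1\circ f=\pi_2$, $\mathrm{Tr}_f(\mu_2)=\mu_1$ and $f^*\varphi_1=\varphi_2$. For connected $\mathbb L_1,\mathbb L_2$, write $\mathbb L_2\sim_c\mathbb L_1$ if they have the same rank and there is $\mathbb L$ with $\mathbb L\le\mathbb L_1$ and $\mathbb L\le\mathbb L_2$; combinatorial equivalence is the equivalence relation generated by $\sim_c$. $\mathbb L$ is $k$-separable if it is connected and for every $\tau\in\Sigma(k)$ and distinct cones $\tau^{(\alpha)},\tau^{(\beta)}$ of $L$ mapping onto $\tau$ one has $\varphi|_{\tau^{(\alpha)}}\ne\varphi|_{\tau^{(\beta)}}$ (as functions pulled back to $\tau$); separable means $1$-separable. *)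

theory Defs
  imports "HOL-Analysis.Analysis"
begin

text \<open>A point of R^k is represented as a function nat => real vanishing at indices >= k;
  the topology is the product topology on nat => real, which on this subspace is the
  Euclidean topology of R^k.\<close>

definition rat_poly_cone_k :: "nat \<Rightarrow> (nat \<Rightarrow> real) set \<Rightarrow> bool" where
  "rat_poly_cone_k k C \<longleftrightarrow>
     (\<exists>V. finite V \<and> (\<forall>v\<in>V. (\<forall>i. v i \<in> \<int>) \<and> (\<forall>i\<ge>k. v i = 0)) \<and>
          C = {(\<lambda>i. \<Sum>v\<in>V. c v * v i) | c. \<forall>v. 0 \<le> c v})"

text \<open>Elements of M(sigma) are real functions on sigma; we represent them as functions
  on the whole type that vanish outside sigma (zero extension).\<close>

definition zext :: "'a set \<Rightarrow> ('a \<Rightarrow> real) \<Rightarrow> 'a \<Rightarrow> real" where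
  "zext s f = (\<lambda>x. if x \<in> s then f x else 0)"

definition evmap :: "('a \<Rightarrow> real) list \<Rightarrow> 'a \<Rightarrow> nat \<Rightarrow> real" where
  "evmap fs x = (\<lambda>i. if i < length fs then (fs ! i) x else 0)"

definition intcomb :: "'a set \<Rightarrow> ('a \<Rightarrow> real) list \<Rightarrow> (nat \<Rightarrow> int) \<Rightarrow> 'a \<Rightarrow> real" where
  "intcomb s fs c = zext s (\<lambda>x. \<Sum>i<length fs. of_int (c i) * (fs ! i) x)"

definition zbasis :: "'a set \<Rightarrow> ('a \<Rightarrow> real) set \<Rightarrow> ('a \<Rightarrow> real) list \<Rightarrow> bool" where
  "zbasis s M fs \<longleftrightarrow>
     M = range (intcomb s fs) \<and>
     (\<forall>c. (\<forall>x\<in>s. (\<Sum>i<length fs. of_int (c i) * (fs ! i) x) = 0) \<longrightarrow> (\<forall>i<length fs. c i = 0))"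

text \<open>Faces of a cone sigma of a cone complex: zero loci in sigma of elements of M(sigma)
  that are nonnegative on sigma (these are exactly the preimages under evaluation of the
  faces of the rational polyhedral cone, since faces of rational cones are cut out by
  integral supporting functionals).\<close>
definition cc_face :: "('a set \<Rightarrow> ('a \<Rightarrow> real) set) \<Rightarrow> 'a set \<Rightarrow> 'a set \<Rightarrow> bool" where
  "cc_face M \<sigma> \<tau> \<longleftrightarrow> (\<exists>m\<in>M \<sigma>. (\<forall>x\<in>\<sigma>. 0 \<le> m x) \<and> \<tau> = {x\<in>\<sigma>. m x = 0})"

definition cc_relint :: "('a set \<Rightarrow> ('a \<Rightarrow> real) set) \<Rightarrow> 'a set \<Rightarrow> 'a set" where
  "cc_relint M \<sigma> = {x\<in>\<sigma>. \<forall>\<tau>. cc_face M \<sigma> \<tau> \<and> x \<in> \<tau> \<longrightarrow> \<tau> = \<sigma>}"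

definition cone_complex ::
  "'a topology \<Rightarrow> 'a set set \<Rightarrow> ('a set \<Rightarrow> ('a \<Rightarrow> real) set) \<Rightarrow> bool" where
  "cone_complex X S M \<longleftrightarrow>
     finite S \<and>
     (\<forall>\<sigma>\<in>S. \<sigma> \<subseteq> topspace X \<and> closedin X \<sigma>) \<and>
     (\<forall>\<sigma>\<in>S. \<forall>m\<in>M \<sigma>. continuous_map (subtopology X \<sigma>) euclideanreal m) \<and>
     (\<forall>\<sigma>\<in>S. \<exists>fs C. zbasis \<sigma> (M \<sigma>) fs \<and> rat_poly_cone_k (length fs) C \<and>
          homeomorphic_map (subtopology X \<sigma>) (subtopology euclidean C) (evmap fs)) \<and>
     (\<forall>\<sigma>\<in>S. \<forall>\<tau>. cc_face M \<sigma> \<tau> \<longrightarrow> \<tau> \<in> S \<and> M \<tau> = zext \<tau> ` M \<sigma>) \<and>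
     (\<forall>x\<in>topspace X. \<exists>!\<sigma>. \<sigma> \<in> S \<and> x \<in> cc_relint M \<sigma>)"

definition cc_morphism ::
  "'a topology \<Rightarrow> 'a set set \<Rightarrow> ('a set \<Rightarrow> ('a \<Rightarrow> real) set) \<Rightarrow>
   'b topology \<Rightarrow> 'b set set \<Rightarrow> ('b set \<Rightarrow> ('b \<Rightarrow> real) set) \<Rightarrow> ('a \<Rightarrow> 'b) \<Rightarrow> bool" where
  "cc_morphism X S M Y T N f \<longleftrightarrow>
     continuous_map X Y f \<and>
     (\<forall>\<sigma>'\<in>S. \<exists>\<sigma>\<in>T. f ` \<sigma>' \<subseteq> \<sigma> \<and> (\<forall>m\<in>N \<sigma>. zext \<sigma>' (m \<circ> f) \<in> M \<sigma>'))"

definition cc_weight ::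
  "'a topology \<Rightarrow> 'a set set \<Rightarrow> ('a set \<Rightarrow> ('a \<Rightarrow> real) set) \<Rightarrow> ('a \<Rightarrow> nat) \<Rightarrow> bool" where
  "cc_weight X S M \<mu> \<longleftrightarrow>
     (\<forall>x\<in>topspace X. 0 < \<mu> x) \<and>
     (\<forall>\<sigma>\<in>S. \<forall>x\<in>cc_relint M \<sigma>. \<forall>y\<in>cc_relint M \<sigma>. \<mu> x = \<mu> y)"

definition trace :: "('a \<Rightarrow> 'b) \<Rightarrow> ('a \<Rightarrow> nat) \<Rightarrow> 'a set \<Rightarrow> 'b \<Rightarrow> nat" where
  "trace f \<mu> A y = (\<Sum>x\<in>{x\<in>A. f x = y}. \<mu> x)"

definition branched_covering ::
  "'a topology \<Rightarrow> 'a set set \<Rightarrow> ('a set \<Rightarrow> ('a \<Rightarrow> real) set) \<Rightarrow> ('a \<Rightarrow> nat) \<Rightarrow>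
   'b topology \<Rightarrow> 'b set set \<Rightarrow> ('b set \<Rightarrow> ('b \<Rightarrow> real) set) \<Rightarrow> ('a \<Rightarrow> 'b) \<Rightarrow> bool" where
  "branched_covering L SL LM \<mu> B SB MB \<pi> \<longleftrightarrow>
     cc_morphism L SL LM B SB MB \<pi> \<and>
     \<pi> ` topspace L = topspace B \<and>
     (\<forall>\<sigma>\<in>SL. \<exists>\<tau>\<in>SB. homeomorphic_map (subtopology L \<sigma>) (subtopology B \<tau>) \<pi>) \<and>
     (\<forall>U V. openin B U \<and> connectedin B U \<and>
            V \<in> connected_components_of (subtopology L {x\<in>topspace L. \<pi> x \<in> U}) \<longrightarrow>
            (\<forall>y\<in>U. \<forall>z\<in>U. trace \<pi> \<mu> V y = trace \<pi> \<mu> V z))"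

definition int_vec :: "real^'n \<Rightarrow> bool" where
  "int_vec v \<longleftrightarrow> (\<forall>i. v $ i \<in> \<int>)"

definition rat_poly_cone :: "(real^'n) set \<Rightarrow> bool" where
  "rat_poly_cone \<sigma> \<longleftrightarrow>
     (\<exists>V. finite V \<and> (\<forall>v\<in>V. int_vec v) \<and>
          \<sigma> = {(\<Sum>v\<in>V. c v *\<^sub>R v) | c. \<forall>v. 0 \<le> c v})"

definition strongly_convex :: "(real^'n) set \<Rightarrow> bool" where
  "strongly_convex \<sigma> \<longleftrightarrow> (\<forall>x. x \<in> \<sigma> \<and> - x \<in> \<sigma> \<longrightarrow> x = 0)"

definition cone_face :: "(real^'n) set \<Rightarrow> (real^'n) set \<Rightarrow> bool" where
  "cone_face \<sigma> \<tau> \<longleftrightarrow> (\<exists>u. (\<forall>x\<in>\<sigma>. 0 \<le> u \<bullet> x) \<and> \<tau> = {x\<in>\<sigma>. u \<bullet> x = 0})"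

definition fan :: "(real^'n) set set \<Rightarrow> bool" where
  "fan \<Sigma> \<longleftrightarrow>
     finite \<Sigma> \<and>
     (\<forall>\<sigma>\<in>\<Sigma>. rat_poly_cone \<sigma> \<and> strongly_convex \<sigma>) \<and>
     (\<forall>\<sigma>\<in>\<Sigma>. \<forall>\<tau>. cone_face \<sigma> \<tau> \<longrightarrow> \<tau> \<in> \<Sigma>) \<and>
     (\<forall>\<sigma>\<in>\<Sigma>. \<forall>\<sigma>'\<in>\<Sigma>. cone_face \<sigma> (\<sigma> \<inter> \<sigma>') \<and> cone_face \<sigma>' (\<sigma> \<inter> \<sigma>'))"

definition complete_fan :: "(real^'n) set set \<Rightarrow> bool" where
  "complete_fan \<Sigma> \<longleftrightarrow> fan \<Sigma> \<and> \<Union>\<Sigma> = UNIV"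

text \<open>The cone complex structure of (N_R, Sigma): M(sigma) = restrictions of M to sigma.\<close>
definition fanM :: "(real^'n) set \<Rightarrow> (real^'n \<Rightarrow> real) set" where
  "fanM \<sigma> = {zext \<sigma> (\<lambda>x. u \<bullet> x) | u. int_vec u}"

definition fan_cones_dim :: "(real^'n) set set \<Rightarrow> nat \<Rightarrow> (real^'n) set set" where
  "fan_cones_dim \<Sigma> k = {\<sigma>\<in>\<Sigma>. dim \<sigma> = k}"

definition trop_lag_ms ::
  "(real^'n) set set \<Rightarrow> nat \<Rightarrow> 'a topology \<Rightarrow> 'a set set \<Rightarrow> ('a set \<Rightarrow> ('a \<Rightarrow> real) set) \<Rightarrow>
   ('a \<Rightarrow> nat) \<Rightarrow> ('a \<Rightarrow> real^'n) \<Rightarrow> ('a \<Rightarrow> real) \<Rightarrow> bool" where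
  "trop_lag_ms \<Sigma> r L SL LM \<mu> \<pi> \<phi> \<longleftrightarrow>
     cone_complex L SL LM \<and> cc_weight L SL LM \<mu> \<and>
     branched_covering L SL LM \<mu> euclidean \<Sigma> fanM \<pi> \<and>
     (\<forall>y. trace \<pi> \<mu> (topspace L) y = r) \<and>
     continuous_map L euclideanreal \<phi> \<and>
     (\<forall>\<sigma>\<in>SL. zext \<sigma> \<phi> \<in> LM \<sigma>)"

definition k_separable ::
  "nat \<Rightarrow> (real^'n) set set \<Rightarrow> 'a topology \<Rightarrow> 'a set set \<Rightarrow>
   ('a \<Rightarrow> real^'n) \<Rightarrow> ('a \<Rightarrow> real) \<Rightarrow> bool" where
  "k_separable k \<Sigma> L SL \<pi> \<phi> \<longleftrightarrow>
     connected_space L \<and>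
     (\<forall>\<tau>\<in>fan_cones_dim \<Sigma> k. \<forall>\<tau>a\<in>SL. \<forall>\<tau>b\<in>SL.
        \<tau>a \<noteq> \<tau>b \<and> \<pi> ` \<tau>a = \<tau> \<and> \<pi> ` \<tau>b = \<tau> \<longrightarrow>
        \<not> (\<forall>x\<in>\<tau>a. \<forall>x'\<in>\<tau>b. \<pi> x = \<pi> x' \<longrightarrow> \<phi> x = \<phi> x'))"

definition separable ::
  "(real^'n) set set \<Rightarrow> 'a topology \<Rightarrow> 'a set set \<Rightarrow>
   ('a \<Rightarrow> real^'n) \<Rightarrow> ('a \<Rightarrow> real) \<Rightarrow> bool" where
  "separable = k_separable 1"

text \<open>ms_le ... L1 ... L2 means L1 <= L2 (witnessed by a surjective morphism L2 -> L1).\<close>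
definition ms_le ::
  "'b topology \<Rightarrow> 'b set set \<Rightarrow> ('b set \<Rightarrow> ('b \<Rightarrow> real) set) \<Rightarrow> ('b \<Rightarrow> nat) \<Rightarrow>
   ('b \<Rightarrow> real^'n) \<Rightarrow> ('b \<Rightarrow> real) \<Rightarrow>
   'a topology \<Rightarrow> 'a set set \<Rightarrow> ('a set \<Rightarrow> ('a \<Rightarrow> real) set) \<Rightarrow> ('a \<Rightarrow> nat) \<Rightarrow>
   ('a \<Rightarrow> real^'n) \<Rightarrow> ('a \<Rightarrow> real) \<Rightarrow> bool" where
  "ms_le L1 S1 LM1 \<mu>1 \<pi>1 \<phi>1 L2 S2 LM2 \<mu>2 \<pi>2 \<phi>2 \<longleftrightarrow>
     (\<exists>f. cc_morphism L2 S2 LM2 L1 S1 LM1 f \<and> f ` topspace L2 = topspace L1 \<and>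
          (\<forall>x\<in>topspace L2. \<pi>1 (f x) = \<pi>2 x) \<and>
          (\<forall>y\<in>topspace L1. trace f \<mu>2 (topspace L2) y = \<mu>1 y) \<and>
          (\<forall>x\<in>topspace L2. \<phi>1 (f x) = \<phi>2 x))"

text \<open>The relation ~_c between connected multi-sections of rank r over Sigma carried by
  the type 'a (a common lower bound is a quotient of either, hence may be taken on 'a).\<close>
definition sim_c ::
  "(real^'n) set set \<Rightarrow> nat \<Rightarrow>
   'a topology \<Rightarrow> 'a set set \<Rightarrow> ('a set \<Rightarrow> ('a \<Rightarrow> real) set) \<Rightarrow> ('a \<Rightarrow> nat) \<Rightarrow>
   ('a \<Rightarrow> real^'n) \<Rightarrow> ('a \<Rightarrow> real) \<Rightarrow>
   'a topology \<Rightarrow> 'a set set \<Rightarrow> ('a set \<Rightarrow> ('a \<Rightarrow> real) set) \<Rightarrow> ('a \<Rightarrow> nat) \<Rightarrow>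
   ('a \<Rightarrow> real^'n) \<Rightarrow> ('a \<Rightarrow> real) \<Rightarrow> bool" where
  "sim_c \<Sigma> r L1 S1 LM1 \<mu>1 \<pi>1 \<phi>1 L2 S2 LM2 \<mu>2 \<pi>2 \<phi>2 \<longleftrightarrow>
     trop_lag_ms \<Sigma> r L1 S1 LM1 \<mu>1 \<pi>1 \<phi>1 \<and> connected_space L1 \<and>
     trop_lag_ms \<Sigma> r L2 S2 LM2 \<mu>2 \<pi>2 \<phi>2 \<and> connected_space L2 \<and>
     (\<exists>(L::'a topology) S M \<mu> \<pi> \<phi>. trop_lag_ms \<Sigma> r L S M \<mu> \<pi> \<phi> \<and>
        ms_le L S M \<mu> \<pi> \<phi> L1 S1 LM1 \<mu>1 \<pi>1 \<phi>1 \<and> ms_le L S M \<mu> \<pi> \<phi> L2 S2 LM2 \<mu>2 \<pi>2 \<phi>2)"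

end

theory Submission
  imports Defs "HOL-Library.Function_Algebras"
begin

definition lc :: "(nat \<Rightarrow> int) list \<Rightarrow> (nat \<Rightarrow> int) \<Rightarrow> nat \<Rightarrow> int" where
  "lc hs c = (\<lambda>i. \<Sum>j<length hs. c j * (hs!j) i)"

definition zsubgroup :: "(nat \<Rightarrow> int) set \<Rightarrow> bool" where
  "zsubgroup H \<longleftrightarrow> 0 \<in> H \<and> (\<forall>a\<in>H. \<forall>b\<in>H. a + b \<in> H) \<and> (\<forall>a\<in>H. -a \<in> H)"

lemma zsub_nat_mult:
  assumes "zsubgroup H" "h \<in> H" shows "(\<lambda>i. int n * h i) \<in> H"
proof (induction n)
  case 0 then show ?case using assms by (simp add: zsubgroup_def zero_fun_def[symmetric])
next
  case (Suc n)
  have "(\<lambda>i. int (Suc n) * h i) = (\<lambda>i. int n * h i) + h" by (auto simp: algebra_simps)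
  then show ?case using Suc assms by (simp add: zsubgroup_def)
qed

lemma zsub_mult:
  assumes "zsubgroup H" "h \<in> H" shows "(\<lambda>i. z * h i) \<in> H"
proof (cases "z \<ge> 0")
  case True
  then show ?thesis using zsub_nat_mult[OF assms, of "nat z"] by simp
next
  case False
  have "(\<lambda>i. z * h i) = - (\<lambda>i. int (nat (-z)) * h i)" using False by (auto simp: fun_eq_iff)
  then show ?thesis using zsub_nat_mult[OF assms, of "nat (-z)"] assms(1) by (simp add: zsubgroup_def)
qed

lemma zsub_diff:
  assumes "zsubgroup H" "a \<in> H" "b \<in> H" shows "a - b \<in> H"
  using assms unfolding zsubgroup_def by (metis diff_conv_add_uminus)

lemma lc_in:
  assumes "zsubgroup H" "set hs \<subseteq> H" shows "lc hs c \<in> H"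
proof -
  have "\<And>n. n \<le> length hs \<Longrightarrow> (\<lambda>i. \<Sum>j<n. c j * (hs!j) i) \<in> H"
  proof -
    fix n assume "n \<le> length hs"
    then show "(\<lambda>i. \<Sum>j<n. c j * (hs!j) i) \<in> H"
    proof (induction n)
      case 0 then show ?case using assms by (simp add: zsubgroup_def zero_fun_def[symmetric])
    next
      case (Suc n)
      have e: "(\<lambda>i. \<Sum>j<Suc n. c j * (hs!j) i) = (\<lambda>i. \<Sum>j<n. c j * (hs!j) i) + (\<lambda>i. c n * (hs!n) i)"
        by (auto simp: fun_eq_iff)
      have "hs!n \<in> H" using Suc.prems assms(2) by (simp add: subset_iff)
      then have "(\<lambda>i. c n * (hs!n) i) \<in> H" using zsub_mult assms(1) by blast
      then show ?case unfolding e using Suc assms(1) by (simp add: zsubgroup_def)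
    qed
  qed
  then show ?thesis unfolding lc_def by simp
qed

lemma lc_snoc: "lc (hs @ [h]) c = (\<lambda>i. lc hs c i + c (length hs) * h i)"
  by (simp add: lc_def fun_eq_iff nth_append)

lemma lc_cong: "(\<And>j. j < length hs \<Longrightarrow> c j = c' j) \<Longrightarrow> lc hs c = lc hs c'"
  by (simp add: lc_def)

lemma subgroup_basis:
  assumes "zsubgroup H" "\<forall>h\<in>H. \<forall>i\<ge>k. h i = 0"
  shows "\<exists>hs. set hs \<subseteq> H \<and> H = range (lc hs) \<and> (\<forall>c. lc hs c = 0 \<longrightarrow> (\<forall>j<length hs. c j = 0))"
  using assms
proof (induction k arbitrary: H)
  case 0
  then have "H = {0}" unfolding zsubgroup_def by (auto simp: fun_eq_iff)
  then show ?case by (intro exI[of _ "[]"]) (auto simp: lc_def zero_fun_def)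
next
  case (Suc k)
  define H1 where "H1 = {h\<in>H. h k = 0}"
  have sg1: "zsubgroup H1" using Suc.prems(1) unfolding zsubgroup_def H1_def by auto
  have v1: "\<forall>h\<in>H1. \<forall>i\<ge>k. h i = 0" using Suc.prems(2) unfolding H1_def
    by (metis (mono_tags, lifting) mem_Collect_eq not_less_eq_eq order_antisym_conv)
  obtain hs1 where hs1: "set hs1 \<subseteq> H1" "H1 = range (lc hs1)" "\<forall>c. lc hs1 c = 0 \<longrightarrow> (\<forall>j<length hs1. c j = 0)"
    using Suc.IH[OF sg1 v1] by blast
  show ?case
  proof (cases "\<forall>h\<in>H. h k = 0")
    case True
    then have "H1 = H" unfolding H1_def by auto
    then show ?thesis using hs1 by blast
  next
    case False
    then obtain h1 where h1: "h1 \<in> H" "h1 k \<noteq> 0" by auto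
    define P where "P = (\<lambda>n::nat. n > 0 \<and> (\<exists>h\<in>H. h k = int n))"
    have "P (nat \<bar>h1 k\<bar>)"
    proof (cases "h1 k > 0")
      case True then show ?thesis using h1 unfolding P_def by (intro conjI bexI[of _ h1]) auto
    next
      case False
      have "-h1 \<in> H" using h1 Suc.prems(1) unfolding zsubgroup_def by auto
      then show ?thesis using h1 False unfolding P_def by (intro conjI bexI[of _ "-h1"]) auto
    qed
    define d where "d = (LEAST n. P n)"
    have Pd: "P d" unfolding d_def by (rule LeastI) fact
    have dmin: "\<And>n. P n \<Longrightarrow> d \<le> n" unfolding d_def by (rule Least_le)
    obtain h0 where h0: "h0 \<in> H" "h0 k = int d" "d > 0" using Pd unfolding P_def by auto
    have dvd: "\<exists>q. h k = q * int d" if "h \<in> H" for h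
    proof -
      define q where "q = h k div int d"
      define rr where "rr = h k mod int d"
      have hr: "h k = q * int d + rr" unfolding q_def rr_def by simp
      have "(\<lambda>i. q * h0 i) \<in> H" using zsub_mult[OF Suc.prems(1) h0(1)] .
      then have hh: "h - (\<lambda>i. q * h0 i) \<in> H" using zsub_diff[OF Suc.prems(1) that] by blast
      have "(h - (\<lambda>i. q * h0 i)) k = rr" using hr h0(2) by simp
      moreover have "0 \<le> rr" "rr < int d" using h0(3) unfolding rr_def by auto
      ultimately have "rr = 0"
      proof -
        assume a: "(h - (\<lambda>i. q * h0 i)) k = rr" "0 \<le> rr" "rr < int d"
        show "rr = 0"
        proof (rule ccontr)
          assume "rr \<noteq> 0"
          then have "P (nat rr)" using a hh unfolding P_def by (intro conjI bexI[of _ "h - (\<lambda>i. q * h0 i)"]) auto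
          then have "d \<le> nat rr" by (rule dmin)
          then show False using a by linarith
        qed
      qed
      then show ?thesis using hr by auto
    qed
    define hs where "hs = hs1 @ [h0]"
    have "set hs \<subseteq> H" using hs1(1) h0(1) unfolding hs_def H1_def by auto
    moreover have "H = range (lc hs)"
    proof
      show "range (lc hs) \<subseteq> H" using lc_in[OF Suc.prems(1) \<open>set hs \<subseteq> H\<close>] by auto
      show "H \<subseteq> range (lc hs)"
      proof
        fix h assume hH: "h \<in> H"
        obtain q where q: "h k = q * int d" using dvd[OF hH] by auto
        have "h - (\<lambda>i. q * h0 i) \<in> H1" unfolding H1_def
          using zsub_diff[OF Suc.prems(1) hH zsub_mult[OF Suc.prems(1) h0(1)]] q h0(2) by auto
        then obtain c where c: "h - (\<lambda>i. q * h0 i) = lc hs1 c" using hs1(2) by auto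
        have "lc hs (c(length hs1 := q)) = h"
        proof -
          have "lc hs1 (c(length hs1 := q)) = lc hs1 c" by (rule lc_cong) auto
          then show ?thesis unfolding hs_def lc_snoc using c by (auto simp: fun_eq_iff algebra_simps)
        qed
        then show "h \<in> range (lc hs)" by (metis rangeI)
      qed
    qed
    moreover have "\<forall>c. lc hs c = 0 \<longrightarrow> (\<forall>j<length hs. c j = 0)"
    proof (intro allI impI)
      fix c j assume z: "lc hs c = 0" and j: "j < length hs"
      have "lc hs1 c \<in> H1" using lc_in[OF sg1 hs1(1)] .
      then have "lc hs1 c k = 0" unfolding H1_def by auto
      then have "c (length hs1) * int d = 0" using fun_cong[OF z, of k] h0(2) unfolding hs_def lc_snoc by simp
      then have cl: "c (length hs1) = 0" using h0(3) by simp
      then have "lc hs1 c = 0" using z unfolding hs_def lc_snoc by (simp add: fun_eq_iff)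
      then have "\<forall>j<length hs1. c j = 0" using hs1(3) by blast
      then show "c j = 0" using j cl unfolding hs_def by (cases "j < length hs1") (auto simp: less_Suc_eq)
    qed
    ultimately show ?thesis by blast
  qed
qed

definition cone_of :: "'v::real_vector set \<Rightarrow> 'v set" where
  "cone_of V = {(\<Sum>v\<in>V. c v *\<^sub>R v) | c. \<forall>v. 0 \<le> c v}"

lemma sum_in_convex_cone:
  assumes "convex_cone S" "finite I" "\<And>i. i \<in> I \<Longrightarrow> y i \<in> S"
  shows "(\<Sum>i\<in>I. y i) \<in> S"
  using assms(2,3)
proof (induction I rule: finite_induct)
  case empty then show ?case using assms(1) by (simp add: convex_cone_contains_0)
next
  case (insert x F) then show ?case using assms(1) by (simp add: convex_cone_add)
qed

lemma cone_of_convex_cone: "convex_cone (cone_of V)"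
proof -
  have ne: "cone_of V \<noteq> {}" unfolding cone_of_def by (auto intro!: exI[of _ "\<lambda>v. 0"])
  have cv: "convex (cone_of V)"
    unfolding convex_def
  proof (intro ballI allI impI)
    fix x y and a b :: real assume x: "x \<in> cone_of V" and y: "y \<in> cone_of V" and ab: "0 \<le> a" "0 \<le> b" "a + b = 1"
    obtain c where c: "x = (\<Sum>v\<in>V. c v *\<^sub>R v)" "\<forall>v. 0 \<le> c v" using x unfolding cone_of_def by auto
    obtain d where d: "y = (\<Sum>v\<in>V. d v *\<^sub>R v)" "\<forall>v. 0 \<le> d v" using y unfolding cone_of_def by auto
    have "a *\<^sub>R x + b *\<^sub>R y = (\<Sum>v\<in>V. (a * c v + b * d v) *\<^sub>R v)"
      unfolding c d by (simp add: scaleR_sum_right sum.distrib scaleR_add_left)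
    moreover have "\<forall>v. 0 \<le> a * c v + b * d v" using c d ab by simp
    ultimately show "a *\<^sub>R x + b *\<^sub>R y \<in> cone_of V" unfolding cone_of_def
      by (auto intro!: exI[of _ "\<lambda>v. a * c v + b * d v"])
  qed
  have cn: "conic (cone_of V)"
    unfolding conic_def
  proof (intro allI impI)
    fix x and t :: real assume x: "x \<in> cone_of V" and t: "0 \<le> t"
    obtain c where c: "x = (\<Sum>v\<in>V. c v *\<^sub>R v)" "\<forall>v. 0 \<le> c v" using x unfolding cone_of_def by auto
    have "t *\<^sub>R x = (\<Sum>v\<in>V. (t * c v) *\<^sub>R v)" unfolding c by (simp add: scaleR_sum_right)
    then show "t *\<^sub>R x \<in> cone_of V" using c t unfolding cone_of_def by fastforce
  qed
  show ?thesis using ne cv cn unfolding convex_cone_def by simp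
qed

lemma cone_of_gen: assumes "finite V" "w \<in> V" shows "w \<in> cone_of V"
proof -
  have "(\<Sum>v\<in>V. (if v = w then 1 else 0) *\<^sub>R v) = (\<Sum>v\<in>V. if v = w then v else 0)"
    by (rule sum.cong) auto
  also have "\<dots> = w" using assms by simp
  finally have "(\<Sum>v\<in>V. (if v = w then 1 else 0) *\<^sub>R v) = w" .
  then show ?thesis unfolding cone_of_def by (auto intro!: exI[of _ "\<lambda>v. if v = w then 1 else 0"])
qed

lemma cone_of_hull: assumes "finite V" shows "cone_of V = convex_cone hull V"
proof
  show "convex_cone hull V \<subseteq> cone_of V"
    by (rule hull_minimal) (use cone_of_gen[OF assms] cone_of_convex_cone in auto)
  show "cone_of V \<subseteq> convex_cone hull V"
  proof
    fix x assume "x \<in> cone_of V"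
    then obtain c where c: "x = (\<Sum>v\<in>V. c v *\<^sub>R v)" "\<forall>v. 0 \<le> c v" unfolding cone_of_def by auto
    show "x \<in> convex_cone hull V" unfolding c
      by (rule sum_in_convex_cone[OF convex_cone_convex_cone_hull assms])
         (simp add: c(2) convex_cone_hull_mul hull_inc)
  qed
qed

lemma cone_of_add: "x \<in> cone_of V \<Longrightarrow> y \<in> cone_of V \<Longrightarrow> x + y \<in> cone_of V"
  using cone_of_convex_cone convex_cone_add by blast

lemma cone_of_scale: "x \<in> cone_of V \<Longrightarrow> 0 \<le> t \<Longrightarrow> t *\<^sub>R x \<in> cone_of V"
  using cone_of_convex_cone by (metis conic_mul convex_cone_def)

lemma cone_of_0: "0 \<in> cone_of V"
  using cone_of_convex_cone convex_cone_contains_0 by blast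

lemma cone_of_sum: "finite I \<Longrightarrow> (\<And>i. i \<in> I \<Longrightarrow> y i \<in> cone_of V) \<Longrightarrow> (\<Sum>i\<in>I. y i) \<in> cone_of V"
  using sum_in_convex_cone[OF cone_of_convex_cone] by blast

lemma cone_of_closed: fixes V :: "'v::euclidean_space set" shows "finite V \<Longrightarrow> closed (cone_of V)"
  by (simp add: cone_of_hull closed_convex_cone_hull)

lemma cone_of_convex: "convex (cone_of V)"
  using cone_of_convex_cone unfolding convex_cone_def by blast

section \<open>Additive positively homogeneous functions on finitely generated cones are linear\<close>

lemma addhom_sum:
  assumes add: "\<And>y1 y2. y1 \<in> K \<Longrightarrow> y2 \<in> K \<Longrightarrow> \<psi> (y1 + y2) = \<psi> y1 + \<psi> y2"
    and hom: "\<And>y a. y \<in> K \<Longrightarrow> 0 \<le> a \<Longrightarrow> \<psi> (a *\<^sub>R y) = a * \<psi> y"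
    and K: "convex_cone K"
    and I: "finite I" "\<And>i. i \<in> I \<Longrightarrow> y i \<in> K" "\<And>i. i \<in> I \<Longrightarrow> 0 \<le> a i"
  shows "\<psi> (\<Sum>i\<in>I. a i *\<^sub>R y i) = (\<Sum>i\<in>I. a i * \<psi> (y i))"
  using I
proof (induction I rule: finite_induct)
  case empty
  have "0 \<in> K" using K convex_cone_contains_0 by blast
  then have "\<psi> (0 *\<^sub>R 0) = 0 * \<psi> 0" using hom by blast
  then show ?case by simp
next
  case (insert x F)
  have "\<forall>i\<in>F. a i *\<^sub>R y i \<in> K" using insert K by (meson conicD convex_cone_def insertCI)
  then have s: "(\<Sum>i\<in>F. a i *\<^sub>R y i) \<in> K"
    using insert by (intro sum_in_convex_cone[OF K]) auto
  have "a x *\<^sub>R y x \<in> K" using insert K by (metis conic_mul convex_cone_def insertI1)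
  then show ?case using insert s add hom by simp
qed

lemma linear_real_cart_inner:
  fixes g :: "real^'n \<Rightarrow> real" assumes "linear g"
  shows "g y = (\<chi> i. g (axis i 1)) \<bullet> y"
proof -
  have "g y = g (\<Sum>i\<in>UNIV. (y$i) *\<^sub>R axis i 1)"
    using basis_expansion[of y] by (simp add: scalar_mult_eq_scaleR)
  also have "\<dots> = (\<Sum>i\<in>UNIV. y$i * g (axis i 1))"
    using assms by (simp add: linear_sum linear_scale)
  also have "\<dots> = (\<chi> i. g (axis i 1)) \<bullet> y" by (simp add: inner_vec_def mult.commute)
  finally show ?thesis .
qed

lemma addhom_linear:
  fixes \<psi> :: "real^'n \<Rightarrow> real"
  assumes V: "finite V"
    and add: "\<And>y1 y2. y1 \<in> cone_of V \<Longrightarrow> y2 \<in> cone_of V \<Longrightarrow> \<psi> (y1 + y2) = \<psi> y1 + \<psi> y2"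
    and hom: "\<And>y a. y \<in> cone_of V \<Longrightarrow> 0 \<le> a \<Longrightarrow> \<psi> (a *\<^sub>R y) = a * \<psi> y"
  shows "\<exists>u. \<forall>y\<in>cone_of V. \<psi> y = u \<bullet> y"
proof -
  note K = cone_of_convex_cone[of V]
  have S: "\<psi> (\<Sum>i\<in>I. a i *\<^sub>R y i) = (\<Sum>i\<in>I. a i * \<psi> (y i))"
    if "finite I" "\<And>i. i \<in> I \<Longrightarrow> y i \<in> cone_of V" "\<And>i. i \<in> I \<Longrightarrow> 0 \<le> a i"
    for I a and y :: "real^'n \<Rightarrow> real^'n"
    apply (rule addhom_sum[of "cone_of V" \<psi>]) using add hom K that by auto
  obtain B where B: "B \<subseteq> V" "independent B" "V \<subseteq> span B" by (rule maximal_independent_subset)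
  have fB: "finite B" using B V finite_subset by blast
  obtain g where g: "linear g" "\<forall>x\<in>B. g x = \<psi> x" using linear_independent_extend[OF B(2)] by blast
  have gv: "\<psi> v = g v" if v: "v \<in> V" for v
  proof -
    have "v \<in> span B" using B v by auto
    then obtain r where r: "v = (\<Sum>b\<in>B. r b *\<^sub>R b)" using span_finite[OF fB] by auto
    define P where "P = {b\<in>B. r b > 0}"
    define N where "N = {b\<in>B. \<not> r b > 0}"
    have fP: "finite P" "finite N" using fB unfolding P_def N_def by auto
    have BPN: "B = P \<union> N" "P \<inter> N = {}" unfolding P_def N_def by auto
    have inK: "b \<in> cone_of V" if "b \<in> B" for b using that B(1) cone_of_gen[OF V] by auto
    have eq: "v + (\<Sum>b\<in>N. (- r b) *\<^sub>R b) = (\<Sum>b\<in>P. r b *\<^sub>R b)"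
    proof -
      have "v = (\<Sum>b\<in>P. r b *\<^sub>R b) + (\<Sum>b\<in>N. r b *\<^sub>R b)"
        unfolding r using BPN fP by (simp add: sum.union_disjoint)
      then show ?thesis by (simp add: sum_negf)
    qed
    have vK: "v \<in> cone_of V" using cone_of_gen[OF V v] .
    have "\<forall>b\<in>N. (- r b) *\<^sub>R b \<in> cone_of V"
    proof
      fix b assume "b \<in> N" then have "b \<in> B" "0 \<le> - r b" by (auto simp: N_def)
      then show "(- r b) *\<^sub>R b \<in> cone_of V" using cone_of_scale inK by blast
    qed
    then have sN: "(\<Sum>b\<in>N. (- r b) *\<^sub>R b) \<in> cone_of V"
      by (intro cone_of_sum[OF fP(2)]) auto
    have "\<psi> (\<Sum>b\<in>N. (- r b) *\<^sub>R b) = (\<Sum>b\<in>N. (- r b) * \<psi> b)"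
      by (rule S[OF fP(2)]) (use inK in \<open>auto simp: N_def\<close>)
    then have "\<psi> (v + (\<Sum>b\<in>N. (- r b) *\<^sub>R b)) = \<psi> v + (\<Sum>b\<in>N. (- r b) * \<psi> b)"
      using add[OF vK sN] by simp
    moreover have "\<psi> (\<Sum>b\<in>P. r b *\<^sub>R b) = (\<Sum>b\<in>P. r b * \<psi> b)"
      using S[OF fP(1)] inK unfolding P_def by auto
    ultimately have "\<psi> v = (\<Sum>b\<in>P. r b * \<psi> b) + (\<Sum>b\<in>N. r b * \<psi> b)"
      unfolding eq by (simp add: sum_negf)
    also have "\<dots> = (\<Sum>b\<in>B. r b * \<psi> b)" using BPN fP by (simp add: sum.union_disjoint)
    also have "\<dots> = (\<Sum>b\<in>B. r b * g b)" using g(2) by simp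
    also have "\<dots> = g v" unfolding r using g(1) by (simp add: linear_sum linear_scale)
    finally show ?thesis .
  qed
  have "\<forall>y\<in>cone_of V. \<psi> y = g y"
  proof
    fix y assume "y \<in> cone_of V"
    then obtain c where c: "y = (\<Sum>v\<in>V. c v *\<^sub>R v)" "\<forall>v. 0 \<le> c v" unfolding cone_of_def by auto
    have "\<psi> y = (\<Sum>v\<in>V. c v * \<psi> v)" unfolding c using S[OF V] cone_of_gen[OF V] c(2) by auto
    also have "\<dots> = (\<Sum>v\<in>V. c v * g v)" using gv by simp
    also have "\<dots> = g y" unfolding c using g(1) by (simp add: linear_sum linear_scale)
    finally show "\<psi> y = g y" .
  qed
  then show ?thesis using linear_real_cart_inner[OF g(1)] by metis
qed

definition ratv :: "real^'n \<Rightarrow> bool" where "ratv x \<longleftrightarrow> (\<forall>i. x$i \<in> \<rat>)"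

lemma int_vec_ratv: "int_vec v \<Longrightarrow> ratv v"
  unfolding int_vec_def ratv_def using Ints_subset_Rats by blast

lemma ratv_inner: "ratv a \<Longrightarrow> ratv b \<Longrightarrow> a \<bullet> b \<in> \<rat>"
  unfolding ratv_def inner_vec_def by (auto intro!: Rats_sum)

lemma proj_exists:
  fixes A :: "(real^'n) set"
  assumes "finite A" "\<forall>a\<in>A. ratv a"
  shows "\<exists>P. linear P \<and> (\<forall>x. ratv x \<longrightarrow> ratv (P x)) \<and> (\<forall>x. \<forall>a\<in>A. P x \<bullet> a = 0)
             \<and> (\<forall>x. (\<forall>a\<in>A. x \<bullet> a = 0) \<longrightarrow> P x = x)"
  using assms
proof (induction A rule: finite_induct)
  case empty
  show ?case by (intro exI[of _ "\<lambda>x. x"]) (auto simp: linear_iff)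
next
  case (insert v A)
  then obtain P where P: "linear P" "\<forall>x. ratv x \<longrightarrow> ratv (P x)" "\<forall>x. \<forall>a\<in>A. P x \<bullet> a = 0"
    "\<forall>x. (\<forall>a\<in>A. x \<bullet> a = 0) \<longrightarrow> P x = x" by auto
  have rv: "ratv v" using insert by auto
  show ?case
  proof (cases "\<forall>x. P x \<bullet> v = 0")
    case True
    then show ?thesis using P by (intro exI[of _ P]) auto
  next
    case False
    then obtain x where x: "P x \<bullet> v \<noteq> 0" by auto
    have "\<exists>i. P (axis i 1) \<bullet> v \<noteq> 0"
    proof (rule ccontr)
      assume "\<not> ?thesis"
      then have z: "\<forall>i. P (axis i 1) \<bullet> v = 0" by auto
      have "P x = (\<Sum>i\<in>UNIV. (x$i) *\<^sub>R P (axis i 1))"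
        using basis_expansion[of x] P(1) by (metis (no_types, lifting) linear_scale linear_sum scalar_mult_eq_scaleR sum.cong)
      then have "P x \<bullet> v = (\<Sum>i\<in>UNIV. (x$i) * (P (axis i 1) \<bullet> v))" by (simp add: inner_sum_left)
      then show False using x z by simp
    qed
    then obtain i where i: "P (axis i 1) \<bullet> v \<noteq> 0" by auto
    define s where "s = P (axis i 1)"
    have rs: "ratv s" unfolding s_def using P(2) by (simp add: ratv_def axis_def)
    define P' where "P' = (\<lambda>x. P x - ((P x \<bullet> v) / (s \<bullet> v)) *\<^sub>R s)"
    have "linear P'"
    proof -
      have l1: "linear (\<lambda>x. (P x \<bullet> v) / (s \<bullet> v))"
        using P(1) unfolding linear_iff by (simp add: inner_add_left add_divide_distrib linear_add linear_scale)
      have "linear (\<lambda>x. ((P x \<bullet> v) / (s \<bullet> v)) *\<^sub>R s)"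
        unfolding linear_iff
      proof (intro conjI allI)
        fix x y show "((P (x + y) \<bullet> v) / (s \<bullet> v)) *\<^sub>R s = ((P x \<bullet> v) / (s \<bullet> v)) *\<^sub>R s + ((P y \<bullet> v) / (s \<bullet> v)) *\<^sub>R s"
          using linear_add[OF l1, of x y] by (simp add: scaleR_add_left)
      next
        fix c :: real and x show "((P (c *\<^sub>R x) \<bullet> v) / (s \<bullet> v)) *\<^sub>R s = c *\<^sub>R (((P x \<bullet> v) / (s \<bullet> v)) *\<^sub>R s)"
          using linear_scale[OF l1, of c x] by simp
      qed
      then show ?thesis unfolding P'_def using P(1) by (rule linear_compose_sub[rotated])
    qed
    moreover have "\<forall>x. ratv x \<longrightarrow> ratv (P' x)"
    proof (intro allI impI)
      fix x :: "real^'n" assume "ratv x"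
      then have "ratv (P x)" using P(2) by auto
      moreover have "(P x \<bullet> v) / (s \<bullet> v) \<in> \<rat>" using ratv_inner[OF \<open>ratv (P x)\<close> rv] ratv_inner[OF rs rv] by simp
      ultimately show "ratv (P' x)" unfolding ratv_def
      proof (intro allI)
        fix i assume a: "\<forall>i. P x $ i \<in> \<rat>" "P x \<bullet> v / (s \<bullet> v) \<in> \<rat>"
        have e: "(P' x)$i = (P x)$i - ((P x \<bullet> v) / (s \<bullet> v)) * s$i" by (simp add: P'_def)
        have "s$i \<in> \<rat>" using rs unfolding ratv_def by auto
        then show "(P' x)$i \<in> \<rat>" unfolding e using a by (intro Rats_diff Rats_mult) auto
      qed
    qed
    moreover have "\<forall>x. \<forall>a\<in>insert v A. P' x \<bullet> a = 0"
    proof (intro allI ballI)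
      fix x a assume a: "a \<in> insert v A"
      show "P' x \<bullet> a = 0"
      proof (cases "a = v")
        case True then show ?thesis using i unfolding P'_def s_def by (simp add: inner_diff_left)
      next
        case False
        then have "a \<in> A" using a by auto
        then show ?thesis using P(3) unfolding P'_def s_def by (simp add: inner_diff_left)
      qed
    qed
    moreover have "\<forall>x. (\<forall>a\<in>insert v A. x \<bullet> a = 0) \<longrightarrow> P' x = x"
    proof (intro allI impI)
      fix x assume "\<forall>a\<in>insert v A. x \<bullet> a = 0"
      then have "P x = x" "x \<bullet> v = 0" using P(4) by auto
      then show "P' x = x" unfolding P'_def by simp
    qed
    ultimately show ?thesis by blast
  qed
qed

lemma ratv_approx:
  fixes u :: "real^'n" assumes "e > 0"
  shows "\<exists>q. ratv q \<and> dist q u < e"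
proof -
  define d where "d = e / real CARD('n)"
  have d: "d > 0" unfolding d_def using assms by simp
  have "\<forall>i. \<exists>r\<in>\<rat>. u$i < r \<and> r < u$i + d" using Rats_dense_in_real d by (metis less_add_same_cancel1)
  then obtain q where q: "\<forall>i. q i \<in> \<rat> \<and> u$i < q i \<and> q i < u$i + d" by metis
  define qv where "qv = (\<chi> i. q i)"
  have "ratv qv" unfolding qv_def ratv_def using q by simp
  moreover have "dist qv u < e"
  proof -
    have "dist qv u = norm (qv - u)" by (simp add: dist_norm)
    also have "\<dots> \<le> (\<Sum>i\<in>UNIV. \<bar>(qv - u)$i\<bar>)" by (rule norm_le_l1_cart)
    also have "\<dots> < (\<Sum>i\<in>(UNIV::'n set). d)"
    proof (rule sum_strict_mono)
      fix i :: 'n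
      have "u$i < q i" "q i < u$i + d" using q by auto
      then show "\<bar>(qv - u)$i\<bar> < d" by (simp add: qv_def abs_less_iff)
    qed auto
    also have "\<dots> = e" unfolding d_def by simp
    finally show ?thesis .
  qed
  ultimately show ?thesis by blast
qed

lemma ratv_scale_int:
  fixes x :: "real^'n" assumes "ratv x"
  shows "\<exists>D::int. D > 0 \<and> int_vec (of_int D *\<^sub>R x)"
proof -
  have "\<forall>i. \<exists>a b. b > 0 \<and> x$i = of_int a / of_int (b::int)"
    using assms unfolding ratv_def by (metis Rats_cases')
  then obtain a b where ab: "\<forall>i. b i > 0 \<and> x$i = of_int (a i) / of_int (b i :: int)" by metis
  define D where "D = (\<Prod>i\<in>UNIV. b i)"
  have D: "D > 0" unfolding D_def using ab by (simp add: prod_pos)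
  have "int_vec (of_int D *\<^sub>R x)" unfolding int_vec_def
  proof
    fix i
    have "b i dvd D" unfolding D_def by (simp add: dvd_prodI)
    then obtain k where k: "D = b i * k" by auto
    have "(of_int D *\<^sub>R x)$i = of_int D * (of_int (a i) / of_int (b i))" using ab by simp
    also have "\<dots> = of_int (k * a i)" using k ab[rule_format, of i] by (simp add: field_simps)
    finally show "(of_int D *\<^sub>R x)$i \<in> \<int>" by simp
  qed
  then show ?thesis using D by blast
qed

lemma cone_inner_split:
  fixes V :: "(real^'n) set" and w :: "real^'n"
  assumes V: "finite V" and c: "\<forall>v. 0 \<le> c v" and w0: "\<forall>v\<in>V0. w \<bullet> v = 0" and w1: "\<forall>v\<in>V-V0. w \<bullet> v > 0"
  shows "0 \<le> w \<bullet> (\<Sum>v\<in>V. c v *\<^sub>R v)" "w \<bullet> (\<Sum>v\<in>V. c v *\<^sub>R v) = 0 \<longleftrightarrow> (\<forall>v\<in>V-V0. c v = 0)"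
proof -
  have e: "w \<bullet> (\<Sum>v\<in>V. c v *\<^sub>R v) = (\<Sum>v\<in>V. c v * (w \<bullet> v))" by (simp add: inner_sum_right)
  have nn: "\<forall>v\<in>V. 0 \<le> c v * (w \<bullet> v)" using c w0 w1
    by (metis DiffI less_eq_real_def mult_nonneg_nonneg mult_zero_right)
  show "0 \<le> w \<bullet> (\<Sum>v\<in>V. c v *\<^sub>R v)" unfolding e using nn by (simp add: sum_nonneg)
  have "w \<bullet> (\<Sum>v\<in>V. c v *\<^sub>R v) = 0 \<longleftrightarrow> (\<forall>v\<in>V. c v * (w \<bullet> v) = 0)"
    unfolding e using nn by (simp add: sum_nonneg_eq_0_iff[OF V])
  also have "\<dots> \<longleftrightarrow> (\<forall>v\<in>V-V0. c v = 0)" using w0 w1 by (metis DiffD1 DiffI less_irrefl mult_eq_0_iff)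
  finally show "w \<bullet> (\<Sum>v\<in>V. c v *\<^sub>R v) = 0 \<longleftrightarrow> (\<forall>v\<in>V-V0. c v = 0)" .
qed

lemma rational_face:
  fixes V :: "(real^'n) set" and u :: "real^'n"
  assumes V: "finite V" "\<forall>v\<in>V. int_vec v" and u: "\<forall>y\<in>cone_of V. 0 \<le> u \<bullet> y"
  shows "\<exists>u'. int_vec u' \<and> (\<forall>y\<in>cone_of V. 0 \<le> u' \<bullet> y) \<and> (\<forall>y\<in>cone_of V. u' \<bullet> y = 0 \<longleftrightarrow> u \<bullet> y = 0)"
proof -
  define V0 where "V0 = {v\<in>V. u \<bullet> v = 0}"
  have u0: "\<forall>v\<in>V0. u \<bullet> v = 0" unfolding V0_def by auto
  have u1: "\<forall>v\<in>V-V0. u \<bullet> v > 0" using u cone_of_gen[OF V(1)] unfolding V0_def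
    by (metis (mono_tags, lifting) DiffE less_eq_real_def mem_Collect_eq)
  have fV0: "finite V0" using V(1) unfolding V0_def by auto
  obtain P where P: "linear P" "\<forall>x. ratv x \<longrightarrow> ratv (P x)" "\<forall>x. \<forall>a\<in>V0. P x \<bullet> a = 0"
    "\<forall>x. (\<forall>a\<in>V0. x \<bullet> a = 0) \<longrightarrow> P x = x"
    using proj_exists[OF fV0] V(2) int_vec_ratv unfolding V0_def by blast
  have Pu: "P u = u" using P(4) u0 by (simp add: inner_commute)
  define Ob where "Ob = (\<Inter>v\<in>V-V0. {q. (P q) \<bullet> v > 0})"
  have contP: "continuous_on UNIV P" using P(1) linear_continuous_on linear_conv_bounded_linear by blast
  have "open Ob" unfolding Ob_def using V(1)
    by (intro open_INT) (auto intro!: open_Collect_less continuous_intros continuous_on_inner contP)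
  moreover have "u \<in> Ob" unfolding Ob_def using Pu u1 by auto
  ultimately obtain e where e: "e > 0" "ball u e \<subseteq> Ob" using open_contains_ball by blast
  obtain q where q: "ratv q" "dist q u < e" using ratv_approx[OF e(1)] by blast
  have "q \<in> Ob" using q e by (auto simp: dist_commute)
  define w where "w = P q"
  have w: "ratv w" "\<forall>v\<in>V0. w \<bullet> v = 0" "\<forall>v\<in>V-V0. w \<bullet> v > 0"
    using P(2,3) q(1) \<open>q \<in> Ob\<close> unfolding w_def Ob_def by auto
  obtain D::int where D: "D > 0" "int_vec (of_int D *\<^sub>R w)" using ratv_scale_int[OF w(1)] by blast
  define u' where "u' = of_int D *\<^sub>R w"
  have u'0: "\<forall>v\<in>V0. u' \<bullet> v = 0" using w unfolding u'_def by simp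
  have u'1: "\<forall>v\<in>V-V0. u' \<bullet> v > 0" using w D unfolding u'_def by simp
  show ?thesis
  proof (intro exI[of _ u'] conjI ballI)
    show "int_vec u'" using D u'_def by simp
  next
    fix y assume "y \<in> cone_of V"
    then obtain c where c: "y = (\<Sum>v\<in>V. c v *\<^sub>R v)" "\<forall>v. 0 \<le> c v" unfolding cone_of_def by auto
    show "0 \<le> u' \<bullet> y" unfolding c(1) using cone_inner_split(1)[OF V(1) c(2) u'0 u'1] .
  next
    fix y assume "y \<in> cone_of V"
    then obtain c where c: "y = (\<Sum>v\<in>V. c v *\<^sub>R v)" "\<forall>v. 0 \<le> c v" unfolding cone_of_def by auto
    show "u' \<bullet> y = 0 \<longleftrightarrow> u \<bullet> y = 0" unfolding c(1)
      using cone_inner_split(2)[OF V(1) c(2) u'0 u'1] cone_inner_split(2)[OF V(1) c(2) u0 u1] by simp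
  qed
qed

lemma pointed_sep:
  fixes V :: "(real^'n) set"
  assumes V: "finite V" and sc: "strongly_convex (cone_of V)"
  shows "\<exists>u. \<forall>y\<in>cone_of V. y \<noteq> 0 \<longrightarrow> 0 < u \<bullet> y"
proof -
  define V' where "V' = V - {0}"
  have fV': "finite V'" using V unfolding V'_def by auto
  have notin: "0 \<notin> convex hull V'"
  proof
    assume "0 \<in> convex hull V'"
    then obtain a where a: "\<forall>x\<in>V'. 0 \<le> a x" "sum a V' = 1" "(\<Sum>x\<in>V'. a x *\<^sub>R x) = 0"
      using convex_hull_finite[OF fV'] by auto
    have "\<exists>w\<in>V'. a w > 0"
    proof (rule ccontr)
      assume "\<not> (\<exists>w\<in>V'. a w > 0)"
      then have "\<forall>x\<in>V'. a x = 0" using a(1) by force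
      then show False using a(2) by simp
    qed
    then obtain w where w: "w \<in> V'" "a w > 0" by blast
    have "(\<Sum>x\<in>V'. a x *\<^sub>R x) = a w *\<^sub>R w + (\<Sum>x\<in>V'-{w}. a x *\<^sub>R x)"
      using w(1) fV' by (simp add: sum.remove)
    then have "a w *\<^sub>R w + (\<Sum>x\<in>V'-{w}. a x *\<^sub>R x) = 0" using a(3) by simp
    then have "(\<Sum>x\<in>V'-{w}. a x *\<^sub>R x) = - (a w *\<^sub>R w)" by (simp add: eq_neg_iff_add_eq_0 add.commute)
    then have e: "- (a w *\<^sub>R w) = (\<Sum>x\<in>V'-{w}. a x *\<^sub>R x)" by simp
    have inV: "x \<in> cone_of V" if "x \<in> V'" for x using that cone_of_gen[OF V] unfolding V'_def by auto
    have "(\<Sum>x\<in>V'-{w}. a x *\<^sub>R x) \<in> cone_of V"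
      using fV' a(1) inV by (intro cone_of_sum) (auto intro: cone_of_scale)
    moreover have "a w *\<^sub>R w \<in> cone_of V" using cone_of_scale[OF inV[OF w(1)]] w(2) by simp
    ultimately have "a w *\<^sub>R w = 0" using sc e unfolding strongly_convex_def by metis
    then show False using w unfolding V'_def by auto
  qed
  show ?thesis
  proof (cases "V' = {}")
    case True
    have "\<forall>y\<in>cone_of V. y = 0"
    proof
      fix y assume "y \<in> cone_of V"
      then obtain c where c: "y = (\<Sum>v\<in>V. c v *\<^sub>R v)" unfolding cone_of_def by auto
      have "\<forall>v\<in>V. v = 0" using True unfolding V'_def by auto
      then show "y = 0" unfolding c by (intro sum.neutral) auto
    qed
    then show ?thesis by auto
  next
    case False
    have "convex (convex hull V')" "closed (convex hull V')"
      using fV' by (auto simp: convex_convex_hull finite_imp_compact compact_convex_hull compact_imp_closed)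
    then obtain a b where ab: "a \<noteq> 0" "0 < b" "\<forall>x\<in>convex hull V'. b < a \<bullet> x"
      using separating_hyperplane_closed_0 notin by blast
    have pos: "\<forall>v\<in>V'. a \<bullet> v > 0" using ab hull_inc by fastforce
    show ?thesis
    proof (intro exI[of _ a] ballI impI)
      fix y assume y: "y \<in> cone_of V" "y \<noteq> 0"
      then obtain c where c: "y = (\<Sum>v\<in>V. c v *\<^sub>R v)" "\<forall>v. 0 \<le> c v" unfolding cone_of_def by auto
      have p0: "\<forall>v\<in>{0}. a \<bullet> v = 0" by simp
      have p1: "\<forall>v\<in>V-{0}. a \<bullet> v > 0" using pos unfolding V'_def .
      have ge: "0 \<le> a \<bullet> y" unfolding c using cone_inner_split(1)[OF V c(2) p0 p1] .
      have "a \<bullet> y \<noteq> 0"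
      proof
        assume "a \<bullet> y = 0"
        then have "\<forall>v\<in>V-{0}. c v = 0" unfolding c using cone_inner_split(2)[OF V c(2) p0 p1] by simp
        then have "y = 0" unfolding c by (metis (no_types, lifting) DiffI scaleR_eq_0_iff singletonD sum.neutral)
        then show False using y by simp
      qed
      then show "0 < a \<bullet> y" using ge by simp
    qed
  qed
qed

lemma dim1_collinear:
  fixes S :: "(real^'n) set"
  assumes "dim S \<le> 1" "y1 \<in> S" "y1 \<noteq> 0" "y2 \<in> S"
  shows "\<exists>t. y2 = t *\<^sub>R y1"
proof (rule ccontr)
  assume "\<not> ?thesis"
  then have ns: "y2 \<notin> span {y1}" by (auto simp: span_singleton)
  then have ne: "y2 \<noteq> y1" using span_base by blast
  have "independent {y2, y1}" using ns assms(3) by (simp add: independent_insert)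
  then have "card {y2, y1} \<le> dim S" using assms by (intro independent_card_le_dim) auto
  then show False using ne assms(1) by simp
qed

definition qtop :: "'a topology \<Rightarrow> ('a \<Rightarrow> 'b) \<Rightarrow> 'b topology" where
  "qtop L f = topology (\<lambda>U. U \<subseteq> f ` topspace L \<and> openin L {x\<in>topspace L. f x \<in> U})"

lemma istopology_qtop: "istopology (\<lambda>U. U \<subseteq> f ` topspace L \<and> openin L {x\<in>topspace L. f x \<in> U})"
  unfolding istopology_def
proof (rule conjI; intro allI impI ballI)
  fix S T assume a: "S \<subseteq> f ` topspace L \<and> openin L {x\<in>topspace L. f x \<in> S}"
    "T \<subseteq> f ` topspace L \<and> openin L {x\<in>topspace L. f x \<in> T}"
  have "{x\<in>topspace L. f x \<in> S \<inter> T} = {x\<in>topspace L. f x \<in> S} \<inter> {x\<in>topspace L. f x \<in> T}" by auto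
  then show "S \<inter> T \<subseteq> f ` topspace L \<and> openin L {x\<in>topspace L. f x \<in> S \<inter> T}" using a by auto
next
  fix K assume a: "\<forall>U\<in>K. U \<subseteq> f ` topspace L \<and> openin L {x\<in>topspace L. f x \<in> U}"
  have "{x\<in>topspace L. f x \<in> \<Union>K} = (\<Union>U\<in>K. {x\<in>topspace L. f x \<in> U})" by auto
  then show "\<Union>K \<subseteq> f ` topspace L \<and> openin L {x\<in>topspace L. f x \<in> \<Union>K}" using a by auto
qed

lemma openin_qtop: "openin (qtop L f) U \<longleftrightarrow> U \<subseteq> f ` topspace L \<and> openin L {x\<in>topspace L. f x \<in> U}"
  by (simp only: qtop_def topology_inverse'[OF istopology_qtop])

lemma topspace_qtop: "topspace (qtop L f) = f ` topspace L"
proof -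
  have "{x\<in>topspace L. f x \<in> f ` topspace L} = topspace L" by auto
  then have "openin (qtop L f) (f ` topspace L)" unfolding openin_qtop by auto
  then have "f ` topspace L \<subseteq> topspace (qtop L f)" by (rule openin_subset)
  moreover have "topspace (qtop L f) \<subseteq> f ` topspace L"
    unfolding topspace_def openin_qtop by auto
  ultimately show ?thesis by auto
qed

lemma closedin_qtop:
  "closedin (qtop L f) S \<longleftrightarrow> S \<subseteq> f ` topspace L \<and> closedin L {x\<in>topspace L. f x \<in> S}"
proof -
  have e: "{x\<in>topspace L. f x \<in> f ` topspace L - S} = topspace L - {x\<in>topspace L. f x \<in> S}" by auto
  have "closedin (qtop L f) S \<longleftrightarrow> S \<subseteq> f ` topspace L \<and> openin (qtop L f) (f ` topspace L - S)"
    by (simp add: closedin_def topspace_qtop)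
  also have "\<dots> \<longleftrightarrow> S \<subseteq> f ` topspace L \<and> openin L (topspace L - {x\<in>topspace L. f x \<in> S})"
    by (simp only: openin_qtop e) blast
  also have "\<dots> \<longleftrightarrow> S \<subseteq> f ` topspace L \<and> closedin L {x\<in>topspace L. f x \<in> S}"
    by (simp add: closedin_def)
  finally show ?thesis .
qed

lemma continuous_map_qtop_f: "continuous_map L (qtop L f) f"
  unfolding continuous_map_def topspace_qtop openin_qtop
proof (intro conjI allI impI)
  show "f \<in> topspace L \<rightarrow> f ` topspace L" by auto
  fix U assume "U \<subseteq> f ` topspace L \<and> openin L {x \<in> topspace L. f x \<in> U}"
  then show "openin L {x \<in> topspace L. f x \<in> U}" by auto
qed

lemma continuous_map_from_qtop:
  assumes "continuous_map L Y h" "\<And>x. x \<in> topspace L \<Longrightarrow> g (f x) = h x"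
  shows "continuous_map (qtop L f) Y g"
  unfolding continuous_map_def topspace_qtop openin_qtop
proof (intro conjI allI impI)
  show "g \<in> f ` topspace L \<rightarrow> topspace Y"
  proof
    fix x assume "x \<in> f ` topspace L"
    then obtain z where z: "z \<in> topspace L" "x = f z" by auto
    have "h z \<in> topspace Y" using assms(1) z(1) by (simp add: continuous_map_def Pi_iff)
    then show "g x \<in> topspace Y" using z assms(2) by simp
  qed
  fix U assume U: "openin Y U"
  have e: "{x \<in> topspace L. f x \<in> {x \<in> f ` topspace L. g x \<in> U}} = {x \<in> topspace L. h x \<in> U}"
  proof (rule set_eqI)
    fix x show "x \<in> {x \<in> topspace L. f x \<in> {x \<in> f ` topspace L. g x \<in> U}} \<longleftrightarrow> x \<in> {x \<in> topspace L. h x \<in> U}"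
      using assms(2)[of x] by auto
  qed
  show "{x \<in> f ` topspace L. g x \<in> U} \<subseteq> f ` topspace L" by auto
  show "openin L {x \<in> topspace L. f x \<in> {x \<in> f ` topspace L. g x \<in> U}}"
    unfolding e using U assms(1) by (auto simp: continuous_map_def)
qed

definition relS :: "(real^'n) set \<Rightarrow> (real^'n) set" where
  "relS \<tau> = {y\<in>\<tau>. \<forall>F. cone_face \<tau> F \<and> y \<in> F \<longrightarrow> F = \<tau>}"

definition gf :: "('a \<Rightarrow> real^'n) \<Rightarrow> ('a \<Rightarrow> real) \<Rightarrow> real^'n \<Rightarrow> int \<Rightarrow> 'a \<Rightarrow> real" where
  "gf p h u k = (\<lambda>x. u \<bullet> p x + of_int k * h x)"

locale tlm =
  fixes Sg :: "(real^'n) set set" and r :: nat and L :: "'a topology" and SL :: "'a set set"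
    and LM :: "'a set \<Rightarrow> ('a \<Rightarrow> real) set" and mu :: "'a \<Rightarrow> nat" and p :: "'a \<Rightarrow> real^'n"
    and h :: "'a \<Rightarrow> real"
  assumes cfan: "complete_fan Sg" and tlms: "trop_lag_ms Sg r L SL LM mu p h"
begin

lemma cc: "cone_complex L SL LM" using tlms unfolding trop_lag_ms_def by blast
lemma wt: "cc_weight L SL LM mu" using tlms unfolding trop_lag_ms_def by blast
lemma bc: "branched_covering L SL LM mu euclidean Sg fanM p" using tlms unfolding trop_lag_ms_def by blast
lemma trr: "\<And>y. trace p mu (topspace L) y = r" using tlms unfolding trop_lag_ms_def by blast
lemma cph: "continuous_map L euclideanreal h" using tlms unfolding trop_lag_ms_def by blast
lemma hM: "\<sigma> \<in> SL \<Longrightarrow> zext \<sigma> h \<in> LM \<sigma>" using tlms unfolding trop_lag_ms_def by blast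

lemma fan: "fan Sg" using cfan unfolding complete_fan_def by blast
lemma Sg_finite: "finite Sg" using fan[unfolded fan_def, THEN conjunct1] .
lemma Sg_rpc: "\<tau> \<in> Sg \<Longrightarrow> rat_poly_cone \<tau>" using fan[unfolded fan_def, THEN conjunct2, THEN conjunct1] by blast
lemma Sg_sc: "\<tau> \<in> Sg \<Longrightarrow> strongly_convex \<tau>" using fan[unfolded fan_def, THEN conjunct2, THEN conjunct1] by blast
lemma Sg_face: "\<tau> \<in> Sg \<Longrightarrow> cone_face \<tau> F \<Longrightarrow> F \<in> Sg" using fan[unfolded fan_def, THEN conjunct2, THEN conjunct2, THEN conjunct1] by blast
lemma Sg_int: "\<tau> \<in> Sg \<Longrightarrow> \<tau>' \<in> Sg \<Longrightarrow> cone_face \<tau> (\<tau> \<inter> \<tau>')" using fan[unfolded fan_def, THEN conjunct2, THEN conjunct2, THEN conjunct2] by blast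

lemma Sg_cone: "\<tau> \<in> Sg \<Longrightarrow> \<exists>V. finite V \<and> (\<forall>v\<in>V. int_vec v) \<and> \<tau> = cone_of V"
  using Sg_rpc unfolding rat_poly_cone_def cone_of_def by blast

lemma SL_finite: "finite SL" using cc[unfolded cone_complex_def, THEN conjunct1] .
lemma SL_sub: "\<sigma> \<in> SL \<Longrightarrow> \<sigma> \<subseteq> topspace L" using cc[unfolded cone_complex_def, THEN conjunct2, THEN conjunct1] by blast
lemma SL_closed: "\<sigma> \<in> SL \<Longrightarrow> closedin L \<sigma>" using cc[unfolded cone_complex_def, THEN conjunct2, THEN conjunct1] by blast
lemma SL_basis: "\<sigma> \<in> SL \<Longrightarrow> \<exists>fs C. zbasis \<sigma> (LM \<sigma>) fs \<and> rat_poly_cone_k (length fs) C \<and>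
          homeomorphic_map (subtopology L \<sigma>) (subtopology euclidean C) (evmap fs)"
  using cc[unfolded cone_complex_def, THEN conjunct2, THEN conjunct2, THEN conjunct2, THEN conjunct1] by blast
lemma SL_face: "\<sigma> \<in> SL \<Longrightarrow> cc_face LM \<sigma> \<tau> \<Longrightarrow> \<tau> \<in> SL \<and> LM \<tau> = zext \<tau> ` LM \<sigma>"
  using cc[unfolded cone_complex_def, THEN conjunct2, THEN conjunct2, THEN conjunct2, THEN conjunct2, THEN conjunct1] by blast
lemma SL_relint: "x \<in> topspace L \<Longrightarrow> \<exists>!\<sigma>. \<sigma> \<in> SL \<and> x \<in> cc_relint LM \<sigma>"
  using cc[unfolded cone_complex_def, THEN conjunct2, THEN conjunct2, THEN conjunct2, THEN conjunct2, THEN conjunct2] by blast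

lemma topspace_Union: "topspace L = \<Union>SL"
proof
  show "topspace L \<subseteq> \<Union>SL"
  proof
    fix x assume "x \<in> topspace L"
    then obtain \<sigma> where "\<sigma> \<in> SL" "x \<in> cc_relint LM \<sigma>" using SL_relint by blast
    then show "x \<in> \<Union>SL" unfolding cc_relint_def by auto
  qed
  show "\<Union>SL \<subseteq> topspace L" using SL_sub by auto
qed

lemma wt_pos: "x \<in> topspace L \<Longrightarrow> 0 < mu x" using wt unfolding cc_weight_def by blast
lemma wt_const: "\<sigma> \<in> SL \<Longrightarrow> x \<in> cc_relint LM \<sigma> \<Longrightarrow> y \<in> cc_relint LM \<sigma> \<Longrightarrow> mu x = mu y"
  using wt unfolding cc_weight_def by blast

lemma bc_mor: "cc_morphism L SL LM euclidean Sg fanM p" using bc[unfolded branched_covering_def, THEN conjunct1] .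
lemma p_cont: "continuous_map L euclidean p"
  using bc_mor[unfolded cc_morphism_def, THEN conjunct1] .
lemma p_surj: "p ` topspace L = UNIV"
  using bc[unfolded branched_covering_def, THEN conjunct2, THEN conjunct1] by simp
lemma p_comp: "openin euclidean U \<Longrightarrow> connectedin euclidean U \<Longrightarrow>
   V \<in> connected_components_of (subtopology L {x\<in>topspace L. p x \<in> U}) \<Longrightarrow> y \<in> U \<Longrightarrow> z \<in> U \<Longrightarrow>
   trace p mu V y = trace p mu V z"
  using bc[unfolded branched_covering_def, THEN conjunct2, THEN conjunct2, THEN conjunct2] by blast

lemma p_homeo: assumes "\<sigma> \<in> SL"
  shows "p ` \<sigma> \<in> Sg" "homeomorphic_map (subtopology L \<sigma>) (subtopology euclidean (p ` \<sigma>)) p"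
proof -
  obtain \<tau> where t: "\<tau> \<in> Sg" "homeomorphic_map (subtopology L \<sigma>) (subtopology euclidean \<tau>) p"
    using bc[unfolded branched_covering_def, THEN conjunct2, THEN conjunct2, THEN conjunct1] assms by blast
  have "p ` \<sigma> = \<tau>" using homeomorphic_imp_surjective_map[OF t(2)] SL_sub[OF assms] by (simp add: Int_absorb1)
  then show "p ` \<sigma> \<in> Sg" "homeomorphic_map (subtopology L \<sigma>) (subtopology euclidean (p ` \<sigma>)) p" using t by auto
qed

lemma p_inj: "\<sigma> \<in> SL \<Longrightarrow> inj_on p \<sigma>"
  using homeomorphic_imp_injective_map[OF p_homeo(2)] SL_sub by (simp add: Int_absorb1)

lemma uM: assumes "\<sigma> \<in> SL" "int_vec u" shows "zext \<sigma> (\<lambda>x. u \<bullet> p x) \<in> LM \<sigma>"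
proof -
  obtain \<tau> where t: "\<tau> \<in> Sg" "p ` \<sigma> \<subseteq> \<tau>" "\<forall>m\<in>fanM \<tau>. zext \<sigma> (m \<circ> p) \<in> LM \<sigma>"
    using bc_mor[unfolded cc_morphism_def, THEN conjunct2] assms(1) by blast
  have "zext \<tau> (\<lambda>x. u \<bullet> x) \<in> fanM \<tau>" unfolding fanM_def using assms(2) by blast
  then have "zext \<sigma> (zext \<tau> (\<lambda>x. u \<bullet> x) \<circ> p) \<in> LM \<sigma>" using t(3) by blast
  moreover have "zext \<sigma> (zext \<tau> (\<lambda>x. u \<bullet> x) \<circ> p) = zext \<sigma> (\<lambda>x. u \<bullet> p x)"
    using t(2) unfolding zext_def by (auto simp: fun_eq_iff)
  ultimately show ?thesis by simp
qed

lemma LM_comb: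
  assumes "\<sigma> \<in> SL" "a \<in> LM \<sigma>" "b \<in> LM \<sigma>"
  shows "zext \<sigma> (\<lambda>x. a x + of_int k * b x) \<in> LM \<sigma>"
proof -
  obtain fs C where zb: "zbasis \<sigma> (LM \<sigma>) fs" using SL_basis[OF assms(1)] by blast
  then have M: "LM \<sigma> = range (intcomb \<sigma> fs)" unfolding zbasis_def by blast
  obtain c1 c2 where c: "a = intcomb \<sigma> fs c1" "b = intcomb \<sigma> fs c2" using assms(2,3) M by auto
  have "zext \<sigma> (\<lambda>x. a x + of_int k * b x) = intcomb \<sigma> fs (\<lambda>i. c1 i + k * c2 i)"
    unfolding c intcomb_def zext_def
    by (auto simp: fun_eq_iff sum.distrib sum_distrib_left algebra_simps)
  then show ?thesis using M by simp
qed

lemma gM: assumes "\<sigma> \<in> SL" "int_vec u" shows "zext \<sigma> (gf p h u k) \<in> LM \<sigma>"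
proof -
  have "zext \<sigma> (\<lambda>x. zext \<sigma> (\<lambda>x. u \<bullet> p x) x + of_int k * zext \<sigma> h x) \<in> LM \<sigma>"
    by (rule LM_comb[OF assms(1) uM[OF assms] hM[OF assms(1)]])
  moreover have "zext \<sigma> (\<lambda>x. zext \<sigma> (\<lambda>x. u \<bullet> p x) x + of_int k * zext \<sigma> h x) = zext \<sigma> (gf p h u k)"
    unfolding zext_def gf_def by (auto simp: fun_eq_iff)
  ultimately show ?thesis by simp
qed

lemma C_add:
  assumes "rat_poly_cone_k k C" "a \<in> C" "b \<in> C" shows "(\<lambda>i. a i + b i) \<in> C"
proof -
  obtain V where V: "C = {(\<lambda>i. \<Sum>v\<in>V. c v * v i) | c. \<forall>v. 0 \<le> c v}"
    using assms(1) unfolding rat_poly_cone_k_def by blast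
  obtain c d where cd: "a = (\<lambda>i. \<Sum>v\<in>V. c v * v i)" "\<forall>v. 0 \<le> c v" "b = (\<lambda>i. \<Sum>v\<in>V. d v * v i)" "\<forall>v. 0 \<le> d v"
    using assms(2,3) V by auto
  have "(\<lambda>i. a i + b i) = (\<lambda>i. \<Sum>v\<in>V. (c v + d v) * v i)" unfolding cd by (auto simp: sum.distrib algebra_simps)
  moreover have "\<forall>v. 0 \<le> c v + d v" using cd by (simp add: add_nonneg_nonneg)
  ultimately show ?thesis unfolding V by (intro CollectI exI[of _ "\<lambda>v. c v + d v"] conjI) auto
qed

lemma C_scale:
  assumes "rat_poly_cone_k k C" "a \<in> C" "0 \<le> t" shows "(\<lambda>i. t * a i) \<in> C"
proof -
  obtain V where V: "C = {(\<lambda>i. \<Sum>v\<in>V. c v * v i) | c. \<forall>v. 0 \<le> c v}"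
    using assms(1) unfolding rat_poly_cone_k_def by blast
  obtain c where cd: "a = (\<lambda>i. \<Sum>v\<in>V. c v * v i)" "\<forall>v. 0 \<le> c v" using assms(2) V by auto
  have "(\<lambda>i. t * a i) = (\<lambda>i. \<Sum>v\<in>V. (t * c v) * v i)" unfolding cd by (auto simp: sum_distrib_left algebra_simps)
  moreover have "\<forall>v. 0 \<le> t * c v" using cd assms(3) by simp
  ultimately show ?thesis unfolding V by (intro CollectI exI[of _ "\<lambda>v. t * c v"] conjI) auto
qed

lemma PL: assumes "\<sigma> \<in> SL" "m \<in> LM \<sigma>" shows "\<exists>w. \<forall>x\<in>\<sigma>. m x = w \<bullet> p x"
proof -
  obtain fs C where zb: "zbasis \<sigma> (LM \<sigma>) fs" and rc: "rat_poly_cone_k (length fs) C"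
    and hm: "homeomorphic_map (subtopology L \<sigma>) (subtopology euclidean C) (evmap fs)"
    using SL_basis[OF assms(1)] by blast
  define k where "k = length fs"
  have M: "LM \<sigma> = range (intcomb \<sigma> fs)" using zb unfolding zbasis_def by blast
  have img: "evmap fs ` \<sigma> = C" using homeomorphic_imp_surjective_map[OF hm] SL_sub[OF assms(1)]
    by (simp add: Int_absorb1)
  have coef: "\<exists>c. \<forall>x\<in>\<sigma>. g x = (\<Sum>i<k. of_int (c i) * (fs!i) x)" if g: "g \<in> LM \<sigma>" for g
  proof -
    obtain c where "g = intcomb \<sigma> fs c" using g M by auto
    then show ?thesis unfolding intcomb_def zext_def k_def by auto
  qed
  have "\<forall>j. \<exists>c. \<forall>x\<in>\<sigma>. p x $ j = (\<Sum>i<k. of_int (c i) * (fs!i) x)"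
  proof
    fix j
    have iv: "int_vec (axis j 1 :: real^'n)" unfolding int_vec_def axis_def by auto
    obtain c where c: "\<forall>x\<in>\<sigma>. zext \<sigma> (\<lambda>x. axis j 1 \<bullet> p x) x = (\<Sum>i<k. of_int (c i) * (fs!i) x)"
      using coef[OF uM[OF assms(1) iv]] by blast
    have "\<forall>x\<in>\<sigma>. p x $ j = (\<Sum>i<k. of_int (c i) * (fs!i) x)"
      using c unfolding zext_def by (auto simp: inner_axis')
    then show "\<exists>c. \<forall>x\<in>\<sigma>. p x $ j = (\<Sum>i<k. of_int (c i) * (fs!i) x)" by blast
  qed
  then obtain cp where cp: "\<forall>j. \<forall>x\<in>\<sigma>. p x $ j = (\<Sum>i<k. of_int (cp j i) * (fs!i) x)" by metis
  obtain cm where cm: "\<forall>x\<in>\<sigma>. m x = (\<Sum>i<k. of_int (cm i) * (fs!i) x)" using coef[OF assms(2)] by blast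
  have ev: "evmap fs x i = (fs!i) x" if "i < k" for x i using that unfolding evmap_def k_def by simp
  have addx: "\<exists>x3\<in>\<sigma>. p x3 = p x1 + p x2 \<and> m x3 = m x1 + m x2" if "x1 \<in> \<sigma>" "x2 \<in> \<sigma>" for x1 x2
  proof -
    have "(\<lambda>i. evmap fs x1 i + evmap fs x2 i) \<in> C"
      using C_add[OF rc] img that by blast
    then obtain x3 where x3: "x3 \<in> \<sigma>" "evmap fs x3 = (\<lambda>i. evmap fs x1 i + evmap fs x2 i)" using img by force
    have e: "(fs!i) x3 = (fs!i) x1 + (fs!i) x2" if "i < k" for i
      using fun_cong[OF x3(2), of i] ev[OF that] by simp
    have "p x3 = p x1 + p x2"
      unfolding vec_eq_iff using cp x3(1) that e by (simp add: sum.distrib algebra_simps)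
    moreover have "m x3 = m x1 + m x2" using cm x3(1) that e by (simp add: sum.distrib algebra_simps)
    ultimately show ?thesis using x3(1) by blast
  qed
  have scx: "\<exists>x3\<in>\<sigma>. p x3 = t *\<^sub>R p x1 \<and> m x3 = t * m x1" if "x1 \<in> \<sigma>" "0 \<le> t" for x1 t
  proof -
    have "(\<lambda>i. t * evmap fs x1 i) \<in> C"
      using C_scale[OF rc _ that(2)] img that by blast
    then obtain x3 where x3: "x3 \<in> \<sigma>" "evmap fs x3 = (\<lambda>i. t * evmap fs x1 i)" using img by force
    have e: "(fs!i) x3 = t * (fs!i) x1" if "i < k" for i
      using fun_cong[OF x3(2), of i] ev[OF that] by simp
    have "p x3 = t *\<^sub>R p x1"
      unfolding vec_eq_iff using cp x3(1) that e by (simp add: sum_distrib_left algebra_simps)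
    moreover have "m x3 = t * m x1" using cm x3(1) that e by (simp add: sum_distrib_left algebra_simps)
    ultimately show ?thesis using x3(1) by blast
  qed
  define \<psi> where "\<psi> = (\<lambda>y. m (inv_into \<sigma> p y))"
  have psi: "\<psi> (p x) = m x" if "x \<in> \<sigma>" for x
    unfolding \<psi>_def using inv_into_f_f[OF p_inj[OF assms(1)] that] by simp
  obtain V where V: "finite V" "\<forall>v\<in>V. int_vec v" "p ` \<sigma> = cone_of V" using Sg_cone[OF p_homeo(1)[OF assms(1)]] by blast
  have "\<exists>w. \<forall>y\<in>cone_of V. \<psi> y = w \<bullet> y"
  proof (rule addhom_linear[OF V(1)])
    fix y1 y2 assume "y1 \<in> cone_of V" "y2 \<in> cone_of V"
    then obtain x1 x2 where x: "x1 \<in> \<sigma>" "x2 \<in> \<sigma>" "y1 = p x1" "y2 = p x2" using V(3) by (metis imageE)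
    obtain x3 where "x3 \<in> \<sigma>" "p x3 = p x1 + p x2" "m x3 = m x1 + m x2" using addx[OF x(1,2)] by blast
    then show "\<psi> (y1 + y2) = \<psi> y1 + \<psi> y2" using psi x by metis
  next
    fix y and a :: real assume "y \<in> cone_of V" "0 \<le> a"
    then obtain x1 where x: "x1 \<in> \<sigma>" "y = p x1" using V(3) by (metis imageE)
    obtain x3 where "x3 \<in> \<sigma>" "p x3 = a *\<^sub>R p x1" "m x3 = a * m x1" using scx[OF x(1) \<open>0 \<le> a\<close>] by blast
    then show "\<psi> (a *\<^sub>R y) = a * \<psi> y" using psi x by metis
  qed
  then obtain w where w: "\<forall>y\<in>cone_of V. \<psi> y = w \<bullet> y" by blast
  show ?thesis using w psi V(3) by (metis image_eqI)
qed

lemma PLh: assumes "\<sigma> \<in> SL" shows "\<exists>w. \<forall>x\<in>\<sigma>. h x = w \<bullet> p x"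
  using PL[OF assms hM[OF assms]] unfolding zext_def by auto

end

context tlm
begin

lemma RFS: assumes "\<tau> \<in> Sg" "cone_face \<tau> F"
  shows "\<exists>u. int_vec u \<and> (\<forall>y\<in>\<tau>. 0 \<le> u \<bullet> y) \<and> F = {y\<in>\<tau>. u \<bullet> y = 0}"
proof -
  obtain u where u: "\<forall>x\<in>\<tau>. 0 \<le> u \<bullet> x" "F = {x\<in>\<tau>. u \<bullet> x = 0}" using assms(2) unfolding cone_face_def by blast
  obtain V where V: "finite V" "\<forall>v\<in>V. int_vec v" "\<tau> = cone_of V" using Sg_cone[OF assms(1)] by blast
  obtain u' where u': "int_vec u'" "\<forall>y\<in>cone_of V. 0 \<le> u' \<bullet> y" "\<forall>y\<in>cone_of V. u' \<bullet> y = 0 \<longleftrightarrow> u \<bullet> y = 0"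
    using rational_face[OF V(1,2)] u(1) V(3) by blast
  show ?thesis using u' u V(3) by (intro exI[of _ u']) auto
qed

lemma FR: assumes "\<tau>1 \<in> Sg" "\<tau>2 \<in> Sg" "y \<in> relS \<tau>1" "y \<in> relS \<tau>2" shows "\<tau>1 = \<tau>2"
proof -
  have "\<tau>1 \<inter> \<tau>2 = \<tau>1" using Sg_int[OF assms(1,2)] assms(3,4) unfolding relS_def by blast
  moreover have "\<tau>2 \<inter> \<tau>1 = \<tau>2" using Sg_int[OF assms(2,1)] assms(3,4) unfolding relS_def by blast
  ultimately show ?thesis by blast
qed

lemma FSUB: assumes "\<tau> \<in> Sg" "\<rho> \<in> Sg" "y \<in> relS \<tau>" "y \<in> \<rho>" shows "\<tau> \<subseteq> \<rho>"
proof -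
  have "\<tau> \<inter> \<rho> = \<tau>" using Sg_int[OF assms(1,2)] assms(3,4) unfolding relS_def by blast
  then show ?thesis by blast
qed

lemma PT: assumes "\<tau> \<in> Sg" "0 \<in> relS \<tau>" shows "\<tau> = {0}"
proof -
  obtain V where V: "finite V" "\<forall>v\<in>V. int_vec v" "\<tau> = cone_of V" using Sg_cone[OF assms(1)] by blast
  obtain u where u: "\<forall>y\<in>cone_of V. y \<noteq> 0 \<longrightarrow> 0 < u \<bullet> y" using pointed_sep[OF V(1)] Sg_sc[OF assms(1)] V(3) by blast
  have nn: "\<forall>x\<in>\<tau>. 0 \<le> u \<bullet> x" using u V(3) by (metis inner_zero_right less_eq_real_def)
  have "cone_face \<tau> {x\<in>\<tau>. u \<bullet> x = 0}" unfolding cone_face_def using nn by blast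
  moreover have "0 \<in> {x\<in>\<tau>. u \<bullet> x = 0}" using assms(2) unfolding relS_def by simp
  ultimately have "{x\<in>\<tau>. u \<bullet> x = 0} = \<tau>" using assms(2) unfolding relS_def by blast
  then have "\<forall>y\<in>\<tau>. y = 0" using u V(3) by (metis (mono_tags, lifting) less_irrefl mem_Collect_eq)
  moreover have "0 \<in> \<tau>" using assms(2) unfolding relS_def by simp
  ultimately show ?thesis by blast
qed

lemma ED: assumes "\<sigma> \<in> SL" "x \<in> \<sigma>" "p x \<in> relS (p ` \<sigma>)" shows "x \<in> cc_relint LM \<sigma>"
  unfolding cc_relint_def
proof (intro CollectI conjI allI impI assms(2))
  fix \<tau>' assume a: "cc_face LM \<sigma> \<tau>' \<and> x \<in> \<tau>'"
  then obtain m where m: "m \<in> LM \<sigma>" "\<forall>x\<in>\<sigma>. 0 \<le> m x" "\<tau>' = {x\<in>\<sigma>. m x = 0}" unfolding cc_face_def by blast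
  obtain w where w: "\<forall>x\<in>\<sigma>. m x = w \<bullet> p x" using PL[OF assms(1) m(1)] by blast
  have "cone_face (p ` \<sigma>) {y\<in>p ` \<sigma>. w \<bullet> y = 0}" unfolding cone_face_def using m(2) w by auto
  moreover have "p x \<in> {y\<in>p ` \<sigma>. w \<bullet> y = 0}" using a m w by auto
  ultimately have "{y\<in>p ` \<sigma>. w \<bullet> y = 0} = p ` \<sigma>" using assms(3) unfolding relS_def by blast
  then have "\<forall>z\<in>\<sigma>. m z = 0" using w by auto
  then show "\<tau>' = \<sigma>" using m(3) by auto
qed

lemma HD: assumes "\<sigma> \<in> SL" "x \<in> cc_relint LM \<sigma>" shows "p x \<in> relS (p ` \<sigma>)"
  unfolding relS_def
proof (intro CollectI conjI allI impI)
  show "p x \<in> p ` \<sigma>" using assms(2) unfolding cc_relint_def by auto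
  fix F assume a: "cone_face (p ` \<sigma>) F \<and> p x \<in> F"
  obtain u where u: "int_vec u" "\<forall>y\<in>p ` \<sigma>. 0 \<le> u \<bullet> y" "F = {y\<in>p ` \<sigma>. u \<bullet> y = 0}"
    using RFS[OF p_homeo(1)[OF assms(1)]] a by blast
  have "cc_face LM \<sigma> {z\<in>\<sigma>. zext \<sigma> (\<lambda>x. u \<bullet> p x) z = 0}"
    unfolding cc_face_def using uM[OF assms(1) u(1)] u(2) by (intro bexI[of _ "zext \<sigma> (\<lambda>x. u \<bullet> p x)"]) (auto simp: zext_def)
  moreover have "x \<in> {z\<in>\<sigma>. zext \<sigma> (\<lambda>x. u \<bullet> p x) z = 0}" using assms(2) a u(3) unfolding cc_relint_def zext_def by auto
  ultimately have E: "{z\<in>\<sigma>. zext \<sigma> (\<lambda>x. u \<bullet> p x) z = 0} = \<sigma>" using assms(2) unfolding cc_relint_def by blast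
  have "\<forall>z\<in>\<sigma>. u \<bullet> p z = 0"
  proof
    fix z assume "z \<in> \<sigma>"
    then have "z \<in> {z\<in>\<sigma>. zext \<sigma> (\<lambda>x. u \<bullet> p x) z = 0}" using E by simp
    then show "u \<bullet> p z = 0" unfolding zext_def by (simp split: if_split_asm)
  qed
  then show "F = p ` \<sigma>" using u(3) by auto
qed

lemma fib_finite: "finite {x\<in>topspace L. p x = y}"
proof -
  have "{x\<in>topspace L. p x = y} \<subseteq> (\<Union>\<sigma>\<in>SL. {inv_into \<sigma> p y})"
  proof
    fix x assume x: "x \<in> {x\<in>topspace L. p x = y}"
    then obtain \<sigma> where s: "\<sigma> \<in> SL" "x \<in> \<sigma>" using topspace_Union by auto
    then have "inv_into \<sigma> p y = x" using x inv_into_f_f[OF p_inj[OF s(1)] s(2)] by auto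
    then show "x \<in> (\<Union>\<sigma>\<in>SL. {inv_into \<sigma> p y})" using s by auto
  qed
  moreover have "finite (\<Union>\<sigma>\<in>SL. {inv_into \<sigma> p y})" using SL_finite by auto
  ultimately show ?thesis by (rule finite_subset)
qed

definition D :: "'a \<Rightarrow> bool" where "D x \<longleftrightarrow> (\<exists>\<kappa>\<in>SL. x \<in> \<kappa> \<and> dim (p ` \<kappa>) \<le> 1)"

definition rel :: "'a \<Rightarrow> 'a \<Rightarrow> bool" where
  "rel x z \<longleftrightarrow> x \<in> topspace L \<and> z \<in> topspace L \<and> p x = p z \<and> h x = h z \<and> (x = z \<or> (D x \<and> D z))"

definition q :: "'a \<Rightarrow> 'a" where "q x = (SOME z. rel x z)"

lemma rel_refl: "x \<in> topspace L \<Longrightarrow> rel x x" unfolding rel_def by auto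
lemma rel_sym: "rel x z \<Longrightarrow> rel z x" unfolding rel_def by auto
lemma rel_trans: "rel x y \<Longrightarrow> rel y z \<Longrightarrow> rel x z" unfolding rel_def by auto
lemma rel_top: "rel x z \<Longrightarrow> x \<in> topspace L \<and> z \<in> topspace L" unfolding rel_def by auto
lemma rel_ph: "rel x z \<Longrightarrow> p x = p z \<and> h x = h z" unfolding rel_def by auto

lemma q_rel: "x \<in> topspace L \<Longrightarrow> rel x (q x)"
  unfolding q_def by (rule someI[of "rel x" x]) (rule rel_refl)

lemma q_eq: "rel x z \<Longrightarrow> q x = q z"
proof -
  assume a: "rel x z"
  have "(\<lambda>w. rel x w) = (\<lambda>w. rel z w)" using a rel_sym rel_trans by blast
  then show ?thesis unfolding q_def by simp
qed

lemma q_iff: "x \<in> topspace L \<Longrightarrow> z \<in> topspace L \<Longrightarrow> q x = q z \<longleftrightarrow> rel x z"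
proof
  assume a: "x \<in> topspace L" "z \<in> topspace L" "q x = q z"
  have "rel x (q z)" using q_rel[OF a(1)] a(3) by simp
  then show "rel x z" using rel_trans rel_sym q_rel[OF a(2)] by blast
qed (rule q_eq)

lemma q_top: "x \<in> topspace L \<Longrightarrow> q x \<in> topspace L" using q_rel rel_top by blast
lemma q_p: "x \<in> topspace L \<Longrightarrow> p (q x) = p x" using rel_ph[OF q_rel] by simp
lemma q_h: "x \<in> topspace L \<Longrightarrow> h (q x) = h x" using rel_ph[OF q_rel] by simp
lemma q_q: "x \<in> topspace L \<Longrightarrow> q (q x) = q x" using q_eq[OF rel_sym[OF q_rel]] by simp

lemma Glue1:
  assumes s: "\<sigma>1 \<in> SL" "\<sigma>2 \<in> SL" "p ` \<sigma>1 = p ` \<sigma>2"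
    and x: "x1 \<in> \<sigma>1" "x2 \<in> \<sigma>2" "p x1 \<in> relS (p ` \<sigma>1)" "rel x1 x2"
    and z1: "z1 \<in> \<sigma>1"
  shows "\<exists>z2\<in>\<sigma>2. rel z1 z2"
proof (cases "x1 = x2")
  case True
  have "x1 \<in> cc_relint LM \<sigma>1" using ED[OF s(1) x(1,3)] .
  moreover have "x1 \<in> cc_relint LM \<sigma>2" using ED[OF s(2)] x(1,2,3) s(3) True by simp
  moreover have "x1 \<in> topspace L" using x(1) SL_sub[OF s(1)] by auto
  ultimately have "\<sigma>1 = \<sigma>2" using SL_relint s(1,2) by blast
  then show ?thesis using z1 rel_refl SL_sub[OF s(1)] by blast
next
  case False
  define \<tau> where "\<tau> = p ` \<sigma>1"
  have tS: "\<tau> \<in> Sg" unfolding \<tau>_def using p_homeo(1)[OF s(1)] .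
  have "D x1" using False x(4) unfolding rel_def by auto
  then obtain \<kappa> where k: "\<kappa> \<in> SL" "x1 \<in> \<kappa>" "dim (p ` \<kappa>) \<le> 1" unfolding D_def by blast
  have "\<tau> \<subseteq> p ` \<kappa>" using FSUB[OF tS p_homeo(1)[OF k(1)]] x(3) k(2) unfolding \<tau>_def by blast
  then have dt: "dim \<tau> \<le> 1" using k(3) dim_subset order_trans by blast
  obtain w1 where w1: "\<forall>x\<in>\<sigma>1. h x = w1 \<bullet> p x" using PLh[OF s(1)] by blast
  obtain w2 where w2: "\<forall>x\<in>\<sigma>2. h x = w2 \<bullet> p x" using PLh[OF s(2)] by blast
  have e12: "w1 \<bullet> p x1 = w2 \<bullet> p x1" using w1 w2 x rel_ph by metis
  define y where "y = p z1"
  have yt: "y \<in> \<tau>" unfolding y_def \<tau>_def using z1 by auto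
  define z2 where "z2 = inv_into \<sigma>2 p y"
  have z2: "z2 \<in> \<sigma>2" "p z2 = y" unfolding z2_def using yt s(3) unfolding \<tau>_def
    by (auto simp: inv_into_into f_inv_into_f)
  have wy: "w1 \<bullet> y = w2 \<bullet> y"
  proof (cases "p x1 = 0")
    case True
    then have "\<tau> = {0}" using PT[OF tS] x(3) unfolding \<tau>_def by simp
    then show ?thesis using yt by simp
  next
    case False
    obtain t where "y = t *\<^sub>R p x1" using dim1_collinear[OF dt _ False yt] x(1) unfolding \<tau>_def by blast
    then show ?thesis using e12 by simp
  qed
  have "D z1" unfolding D_def using s(1) z1 dt unfolding \<tau>_def by blast
  moreover have "D z2" unfolding D_def using s(2) z2(1) dt s(3) unfolding \<tau>_def by auto
  moreover have "h z1 = h z2" using w1 w2 z1 z2 wy unfolding y_def by simp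
  moreover have "z1 \<in> topspace L" "z2 \<in> topspace L" using z1 z2(1) SL_sub s(1,2) by auto
  moreover have "p z1 = p z2" using z2(2) unfolding y_def by simp
  ultimately have "rel z1 z2" unfolding rel_def by simp
  then show ?thesis using z2(1) by blast
qed

lemma Glue:
  assumes s: "\<sigma>1 \<in> SL" "\<sigma>2 \<in> SL" "p ` \<sigma>1 = p ` \<sigma>2"
    and x: "x1 \<in> \<sigma>1" "x2 \<in> \<sigma>2" "p x1 \<in> relS (p ` \<sigma>1)" "rel x1 x2"
  shows "q ` \<sigma>1 = q ` \<sigma>2"
proof -
  have 1: "q ` \<sigma>1 \<subseteq> q ` \<sigma>2"
  proof
    fix y assume "y \<in> q ` \<sigma>1"
    then obtain z1 where z1: "z1 \<in> \<sigma>1" "y = q z1" by auto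
    then obtain z2 where "z2 \<in> \<sigma>2" "rel z1 z2" using Glue1[OF s x] by blast
    then show "y \<in> q ` \<sigma>2" using z1 q_eq by auto
  qed
  have "p x2 \<in> relS (p ` \<sigma>2)" using x(3,4) s(3) rel_ph by metis
  then have 2: "q ` \<sigma>2 \<subseteq> q ` \<sigma>1"
  proof -
    assume a: "p x2 \<in> relS (p ` \<sigma>2)"
    show ?thesis
    proof
      fix y assume "y \<in> q ` \<sigma>2"
      then obtain z2 where z2: "z2 \<in> \<sigma>2" "y = q z2" by auto
      then obtain z1 where "z1 \<in> \<sigma>1" "rel z2 z1"
        using Glue1[OF s(2,1) s(3)[symmetric] x(2,1) a rel_sym[OF x(4)]] by blast
      then show "y \<in> q ` \<sigma>1" using z2 q_eq by auto
    qed
  qed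
  show ?thesis using 1 2 by blast
qed

end

context tlm
begin

definition R where "R = q ` topspace L"
definition Ls where "Ls = qtop L q"
definition Ss where "Ss = (\<lambda>\<sigma>. q ` \<sigma>) ` SL"
definition Ms :: "'a set \<Rightarrow> ('a \<Rightarrow> real) set" where "Ms S = {zext S (gf p h u k) | u k. int_vec u}"
definition mus where "mus x = trace q mu (topspace L) x"

lemma R_sub: "R \<subseteq> topspace L" unfolding R_def using q_top by auto
lemma R_q: "x \<in> R \<Longrightarrow> q x = x" unfolding R_def using q_q by auto
lemma topspace_Ls: "topspace Ls = R" unfolding Ls_def R_def by (rule topspace_qtop)
lemma q_cont: "continuous_map L Ls q" unfolding Ls_def by (rule continuous_map_qtop_f)
lemma p_cont_s: "continuous_map Ls euclidean p"
  unfolding Ls_def by (rule continuous_map_from_qtop[OF p_cont]) (simp add: q_p)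
lemma h_cont_s: "continuous_map Ls euclideanreal h"
  unfolding Ls_def by (rule continuous_map_from_qtop[OF cph]) (simp add: q_h)
lemma gf_q: "x \<in> topspace L \<Longrightarrow> gf p h u k (q x) = gf p h u k x"
  unfolding gf_def by (simp add: q_p q_h)
lemma gf_cont: "continuous_map X euclidean p \<Longrightarrow> continuous_map X euclideanreal h \<Longrightarrow>
    continuous_map X euclideanreal (gf p h u k)"
proof -
  assume a: "continuous_map X euclidean p" "continuous_map X euclideanreal h"
  have c: "continuous_map euclidean euclideanreal (\<lambda>y. u \<bullet> y)"
    by (simp add: continuous_on_inner continuous_on_const continuous_on_id)
  have "continuous_map X euclideanreal ((\<lambda>y. u \<bullet> y) \<circ> p)"
    by (rule continuous_map_compose[OF a(1) c])
  then have "continuous_map X euclideanreal (\<lambda>x. u \<bullet> p x)" by (simp add: o_def)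
  then show ?thesis unfolding gf_def using a(2) by (intro continuous_intros) auto
qed

lemma qs_sub: "\<sigma> \<in> SL \<Longrightarrow> q ` \<sigma> \<subseteq> R" unfolding R_def using SL_sub by auto
lemma p_qs: "\<sigma> \<in> SL \<Longrightarrow> p ` q ` \<sigma> = p ` \<sigma>"
proof -
  assume s: "\<sigma> \<in> SL"
  have "\<forall>x\<in>\<sigma>. p (q x) = p x" using SL_sub[OF s] q_p by auto
  then show ?thesis by (auto simp: image_image intro!: image_cong)
qed

lemma p_inj_s: assumes "\<sigma> \<in> SL" shows "inj_on p (q ` \<sigma>)"
proof
  fix a b assume ab: "a \<in> q ` \<sigma>" "b \<in> q ` \<sigma>" "p a = p b"
  then obtain za zb where z: "za \<in> \<sigma>" "zb \<in> \<sigma>" "a = q za" "b = q zb" by auto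
  have "za \<in> topspace L" "zb \<in> topspace L" using z(1,2) SL_sub[OF assms] by auto
  then have "p za = p zb" using ab(3) z(3,4) q_p by auto
  then have "za = zb" using p_inj[OF assms] z by (meson inj_onD)
  then show "a = b" using z by simp
qed

lemma p_inv: assumes "\<sigma> \<in> SL"
  obtains g where "continuous_map (subtopology euclidean (p ` \<sigma>)) (subtopology L \<sigma>) g"
    "\<And>x. x \<in> \<sigma> \<Longrightarrow> g (p x) = x" "\<And>y. y \<in> p ` \<sigma> \<Longrightarrow> p (g y) = y" "\<And>y. y \<in> p ` \<sigma> \<Longrightarrow> g y \<in> \<sigma>"
proof -
  obtain g where g: "homeomorphic_maps (subtopology L \<sigma>) (subtopology euclidean (p ` \<sigma>)) p g"
    using p_homeo(2)[OF assms] homeomorphic_map_maps by blast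
  have ts: "topspace (subtopology L \<sigma>) = \<sigma>" using SL_sub[OF assms] by (simp add: Int_absorb1)
  have c: "continuous_map (subtopology euclidean (p ` \<sigma>)) (subtopology L \<sigma>) g" using g unfolding homeomorphic_maps_def by blast
  have g4: "g y \<in> \<sigma>" if "y \<in> p ` \<sigma>" for y
    using continuous_map_image_subset_topspace[OF c] that ts by auto
  have g2: "\<forall>x\<in>\<sigma>. g (p x) = x" using g ts unfolding homeomorphic_maps_def by simp
  have g3: "\<forall>y\<in>p ` \<sigma>. p (g y) = y" using g unfolding homeomorphic_maps_def by simp
  show ?thesis by (rule that[OF c]) (use g2 g3 g4 in auto)
qed

lemma Dset_closed: "closedin L (\<Union>{\<kappa>\<in>SL. dim (p ` \<kappa>) \<le> 1})"
  by (rule closedin_Union) (use SL_finite SL_closed in auto)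

lemma qs_closed: assumes s: "\<sigma> \<in> SL" shows "closedin Ls (q ` \<sigma>)"
proof -
  obtain g where g: "continuous_map (subtopology euclidean (p ` \<sigma>)) (subtopology L \<sigma>) g"
    "\<And>x. x \<in> \<sigma> \<Longrightarrow> g (p x) = x" "\<And>y. y \<in> p ` \<sigma> \<Longrightarrow> p (g y) = y" "\<And>y. y \<in> p ` \<sigma> \<Longrightarrow> g y \<in> \<sigma>"
    using p_inv[OF s] by blast
  define Ds where "Ds = \<Union>{\<kappa>\<in>SL. dim (p ` \<kappa>) \<le> 1}"
  have Dx: "D x \<longleftrightarrow> x \<in> Ds" for x unfolding D_def Ds_def by auto
  define K where "K = p ` (\<sigma> \<inter> Ds)"
  have Ds_top: "Ds \<subseteq> topspace L" unfolding Ds_def using SL_sub by auto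
  have Kt: "K \<subseteq> p ` \<sigma>" unfolding K_def by auto
  have eq: "{x\<in>topspace L. q x \<in> q ` \<sigma>} = \<sigma> \<union> {x\<in>topspace L. x \<in> Ds \<and> p x \<in> K \<and> h x = h (g (p x))}"
  proof (rule set_eqI, rule iffI)
    fix x assume "x \<in> {x\<in>topspace L. q x \<in> q ` \<sigma>}"
    then obtain z where z: "x \<in> topspace L" "z \<in> \<sigma>" "q x = q z" by auto
    have zt: "z \<in> topspace L" using z(2) SL_sub[OF s] by auto
    have rl: "rel x z" using q_iff[OF z(1) zt] z(3) by simp
    show "x \<in> \<sigma> \<union> {x\<in>topspace L. x \<in> Ds \<and> p x \<in> K \<and> h x = h (g (p x))}"
    proof (cases "x = z")
      case True then show ?thesis using z by auto
    next
      case False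
      then have "D x" "D z" using rl unfolding rel_def by auto
      moreover have "p x = p z" "h x = h z" using rl unfolding rel_def by auto
      ultimately show ?thesis using z(1,2) g(2)[OF z(2)] unfolding K_def Dx by auto
    qed
  next
    fix x assume "x \<in> \<sigma> \<union> {x\<in>topspace L. x \<in> Ds \<and> p x \<in> K \<and> h x = h (g (p x))}"
    then consider "x \<in> \<sigma>" | "x \<in> topspace L" "x \<in> Ds" "p x \<in> K" "h x = h (g (p x))" by auto
    then show "x \<in> {x\<in>topspace L. q x \<in> q ` \<sigma>}"
    proof cases
      case 1 then show ?thesis using SL_sub[OF s] by auto
    next
      case 2
      then obtain z where z: "z \<in> \<sigma>" "z \<in> Ds" "p x = p z" unfolding K_def by auto
      have "g (p x) = z" using g(2)[OF z(1)] z(3) by simp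
      then have "rel x z" unfolding rel_def using 2 z Dx SL_sub[OF s] by auto
      then show ?thesis using 2 z q_eq by auto
    qed
  qed
  have cK: "closedin euclidean K"
  proof -
    have "closedin (subtopology L \<sigma>) (\<sigma> \<inter> Ds)"
      using Dset_closed unfolding Ds_def by (simp add: closedin_subtopology_Int_closed)
    moreover have "\<sigma> \<inter> Ds \<subseteq> topspace (subtopology L \<sigma>)" using SL_sub[OF s] by auto
    ultimately have "closedin (subtopology euclidean (p ` \<sigma>)) K"
      unfolding K_def using homeomorphic_map_closedness[OF p_homeo(2)[OF s], of "\<sigma> \<inter> Ds"] by simp
    moreover have "closedin euclidean (p ` \<sigma>)"
    proof -
      obtain V where V: "finite V" "p ` \<sigma> = cone_of V" using Sg_cone[OF p_homeo(1)[OF s]] by blast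
      then show ?thesis using cone_of_closed by (simp add: closed_closedin[symmetric])
    qed
    ultimately show ?thesis using closedin_trans_full by blast
  qed
  define A where "A = {x\<in>topspace L. x \<in> Ds \<and> p x \<in> K}"
  have cA: "closedin L A"
  proof -
    have "A = Ds \<inter> {x\<in>topspace L. p x \<in> K}" unfolding A_def using Ds_top by auto
    then show ?thesis using Dset_closed closedin_continuous_map_preimage[OF p_cont cK] unfolding Ds_def by auto
  qed
  have cf: "continuous_map (subtopology L A) euclideanreal (\<lambda>x. h x - h (g (p x)))"
  proof (intro continuous_map_diff)
    show "continuous_map (subtopology L A) euclideanreal h" using cph by (rule continuous_map_from_subtopology)
    have c1: "continuous_map (subtopology L A) (subtopology euclidean (p ` \<sigma>)) p"
      using continuous_map_from_subtopology[OF p_cont] Kt unfolding A_def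
      by (intro continuous_map_into_subtopology) auto
    have c2: "continuous_map (subtopology euclidean (p ` \<sigma>)) euclideanreal (h \<circ> g)"
      using continuous_map_compose[OF g(1) continuous_map_from_subtopology[OF cph]] .
    show "continuous_map (subtopology L A) euclideanreal (\<lambda>x. h (g (p x)))"
      using continuous_map_compose[OF c1 c2] by (simp add: o_def)
  qed
  have "closedin (subtopology L A) {x\<in>topspace (subtopology L A). h x - h (g (p x)) \<in> {0}}"
    using closedin_continuous_map_preimage[OF cf, of "{0}"] by (simp add: closed_singleton)
  moreover have "{x\<in>topspace (subtopology L A). h x - h (g (p x)) \<in> {0}} = {x\<in>topspace L. x \<in> Ds \<and> p x \<in> K \<and> h x = h (g (p x))}"
    unfolding A_def by auto
  ultimately have "closedin L {x\<in>topspace L. x \<in> Ds \<and> p x \<in> K \<and> h x = h (g (p x))}"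
    using closedin_trans_full cA by metis
  then have "closedin L {x\<in>topspace L. q x \<in> q ` \<sigma>}" unfolding eq using SL_closed[OF s] by auto
  then show ?thesis unfolding Ls_def closedin_qtop using SL_sub[OF s] by auto
qed

lemma qs_homeo: assumes s: "\<sigma> \<in> SL"
  shows "homeomorphic_map (subtopology Ls (q ` \<sigma>)) (subtopology euclidean (p ` \<sigma>)) p"
proof -
  obtain g where g: "continuous_map (subtopology euclidean (p ` \<sigma>)) (subtopology L \<sigma>) g"
    "\<And>x. x \<in> \<sigma> \<Longrightarrow> g (p x) = x" "\<And>y. y \<in> p ` \<sigma> \<Longrightarrow> p (g y) = y" "\<And>y. y \<in> p ` \<sigma> \<Longrightarrow> g y \<in> \<sigma>"
    using p_inv[OF s] by blast
  have ts: "topspace (subtopology Ls (q ` \<sigma>)) = q ` \<sigma>" using qs_sub[OF s] topspace_Ls by (auto simp: Int_absorb1)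
  have "homeomorphic_maps (subtopology Ls (q ` \<sigma>)) (subtopology euclidean (p ` \<sigma>)) p (q \<circ> g)"
    unfolding homeomorphic_maps_def
  proof (intro conjI ballI)
    show "continuous_map (subtopology Ls (q ` \<sigma>)) (subtopology euclidean (p ` \<sigma>)) p"
      using continuous_map_from_subtopology[OF p_cont_s] p_qs[OF s] ts
      by (intro continuous_map_into_subtopology) auto
    have "continuous_map (subtopology L \<sigma>) (subtopology Ls (q ` \<sigma>)) q"
      using continuous_map_from_subtopology[OF q_cont] SL_sub[OF s]
      by (intro continuous_map_into_subtopology) auto
    then show "continuous_map (subtopology euclidean (p ` \<sigma>)) (subtopology Ls (q ` \<sigma>)) (q \<circ> g)"
      using continuous_map_compose[OF g(1)] by blast
    fix x assume "x \<in> topspace (subtopology Ls (q ` \<sigma>))"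
    then obtain z where z: "z \<in> \<sigma>" "x = q z" using ts by auto
    have "p x = p z" using z SL_sub[OF s] q_p by auto
    then show "(q \<circ> g) (p x) = x" using z g(2) by simp
  next
    fix y assume "y \<in> topspace (subtopology euclidean (p ` \<sigma>))"
    then have y: "y \<in> p ` \<sigma>" by simp
    have gy: "g y \<in> topspace L" using g(4)[OF y] SL_sub[OF s] by auto
    show "p ((q \<circ> g) y) = y" using q_p[OF gy] g(3)[OF y] by simp
  qed
  then show ?thesis using homeomorphic_map_maps by blast
qed

end

lemma rpck_image:
  fixes A :: "(nat \<Rightarrow> real) \<Rightarrow> nat \<Rightarrow> real"
  assumes C: "rat_poly_cone_k k C"
    and A: "\<And>v j. A v j = (if j < r then \<Sum>i<k. of_int (Mx j i) * v i else 0)"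
  shows "rat_poly_cone_k r (A ` C)"
proof -
  obtain V where V: "finite V" "\<forall>v\<in>V. (\<forall>i. v i \<in> \<int>) \<and> (\<forall>i\<ge>k. v i = 0)"
    "C = {(\<lambda>i. \<Sum>v\<in>V. c v * v i) | c. \<forall>v. 0 \<le> c v}"
    using C unfolding rat_poly_cone_k_def by blast
  have Alin: "A (\<lambda>i. \<Sum>v\<in>V. c v * v i) = (\<lambda>j. \<Sum>v\<in>V. c v * A v j)" for c
  proof
    fix j
    show "A (\<lambda>i. \<Sum>v\<in>V. c v * v i) j = (\<Sum>v\<in>V. c v * A v j)"
    proof (cases "j < r")
      case True
      have "(\<Sum>i<k. of_int (Mx j i) * (\<Sum>v\<in>V. c v * v i)) = (\<Sum>i<k. \<Sum>v\<in>V. c v * (of_int (Mx j i) * v i))"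
        by (simp add: sum_distrib_left algebra_simps)
      also have "\<dots> = (\<Sum>v\<in>V. \<Sum>i<k. c v * (of_int (Mx j i) * v i))" by (rule sum.swap)
      also have "\<dots> = (\<Sum>v\<in>V. c v * (\<Sum>i<k. of_int (Mx j i) * v i))" by (simp add: sum_distrib_left)
      finally show ?thesis using True by (simp add: A)
    qed (simp add: A)
  qed
  define V' where "V' = A ` V"
  have "finite V'" unfolding V'_def using V(1) by simp
  moreover have "\<forall>w\<in>V'. (\<forall>i. w i \<in> \<int>) \<and> (\<forall>i\<ge>r. w i = 0)"
  proof
    fix w assume "w \<in> V'"
    then obtain v where v: "v \<in> V" "w = A v" unfolding V'_def by auto
    have "\<forall>i. w i \<in> \<int>" unfolding v(2) A using V(2) v(1) by (auto intro!: Ints_sum Ints_mult)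
    moreover have "\<forall>i\<ge>r. w i = 0" unfolding v(2) A by simp
    ultimately show "(\<forall>i. w i \<in> \<int>) \<and> (\<forall>i\<ge>r. w i = 0)" by blast
  qed
  moreover have "A ` C = {(\<lambda>j. \<Sum>w\<in>V'. c w * w j) | c. \<forall>w. 0 \<le> c w}"
  proof (rule set_eqI, rule iffI)
    fix x assume "x \<in> A ` C"
    then obtain c where c: "x = A (\<lambda>i. \<Sum>v\<in>V. c v * v i)" "\<forall>v. 0 \<le> c v" using V(3) by auto
    define c' where "c' = (\<lambda>w. \<Sum>v\<in>{v\<in>V. A v = w}. c v)"
    have "x = (\<lambda>j. \<Sum>w\<in>V'. c' w * w j)"
    proof
      fix j
      have "x j = (\<Sum>v\<in>V. c v * A v j)" using c Alin by simp
      also have "\<dots> = (\<Sum>w\<in>A ` V. \<Sum>v\<in>{v\<in>V. A v = w}. c v * A v j)"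
        by (rule sum.image_gen[OF V(1)])
      also have "\<dots> = (\<Sum>w\<in>V'. c' w * w j)" unfolding V'_def c'_def
        by (rule sum.cong) (auto simp: sum_distrib_right)
      finally show "x j = (\<Sum>w\<in>V'. c' w * w j)" .
    qed
    moreover have "\<forall>w. 0 \<le> c' w" unfolding c'_def using c(2) by (simp add: sum_nonneg)
    ultimately show "x \<in> {(\<lambda>j. \<Sum>w\<in>V'. c w * w j) | c. \<forall>w. 0 \<le> c w}" by blast
  next
    fix x assume "x \<in> {(\<lambda>j. \<Sum>w\<in>V'. c w * w j) | c. \<forall>w. 0 \<le> c w}"
    then obtain c' where c': "x = (\<lambda>j. \<Sum>w\<in>V'. c' w * w j)" "\<forall>w. 0 \<le> c' w" by auto
    define c where "c = (\<lambda>v. c' (A v) / real (card {v'\<in>V. A v' = A v}))"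
    have cnn: "\<forall>v. 0 \<le> c v" unfolding c_def using c'(2) by simp
    have "A (\<lambda>i. \<Sum>v\<in>V. c v * v i) = x"
    proof
      fix j
      have "A (\<lambda>i. \<Sum>v\<in>V. c v * v i) j = (\<Sum>v\<in>V. c v * A v j)" using Alin by simp
      also have "\<dots> = (\<Sum>w\<in>A ` V. \<Sum>v\<in>{v\<in>V. A v = w}. c v * A v j)"
        by (rule sum.image_gen[OF V(1)])
      also have "\<dots> = (\<Sum>w\<in>V'. c' w * w j)" unfolding V'_def
      proof (rule sum.cong[OF refl])
        fix w assume w: "w \<in> A ` V"
        have fin: "finite {v\<in>V. A v = w}" using V(1) by simp
        have ne: "{v\<in>V. A v = w} \<noteq> {}" using w by auto
        have "(\<Sum>v\<in>{v\<in>V. A v = w}. c v * A v j) = (\<Sum>v\<in>{v\<in>V. A v = w}. c' w / real (card {v'\<in>V. A v' = w}) * w j)"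
          unfolding c_def by (rule sum.cong) auto
        also have "\<dots> = c' w * w j" using fin ne by (simp add: card_gt_0_iff)
        finally show "(\<Sum>v\<in>{v\<in>V. A v = w}. c v * A v j) = c' w * w j" .
      qed
      finally show "A (\<lambda>i. \<Sum>v\<in>V. c v * v i) j = x j" using c'(1) by simp
    qed
    moreover have "(\<lambda>i. \<Sum>v\<in>V. c v * v i) \<in> C" using V(3) cnn by blast
    ultimately show "x \<in> A ` C" by blast
  qed
  ultimately show ?thesis unfolding rat_poly_cone_k_def by blast
qed

lemma gf_sum: "(\<Sum>j<r. of_int (d j) * gf p h (U j) (KK j) x) =
   gf p h (\<Sum>j<r. of_int (d j) *\<^sub>R U j) (\<Sum>j<r. d j * KK j) x"
  unfolding gf_def by (simp add: inner_sum_left sum.distrib sum_distrib_left algebra_simps)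

lemma int_vec_sum: "(\<And>j. int_vec (U j)) \<Longrightarrow> int_vec (\<Sum>j<r. of_int (d j) *\<^sub>R U j)"
  unfolding int_vec_def by (auto intro!: Ints_sum Ints_mult)

lemma int_vec_add: "int_vec a \<Longrightarrow> int_vec b \<Longrightarrow> int_vec (a + b)" unfolding int_vec_def by auto
lemma int_vec_neg: "int_vec a \<Longrightarrow> int_vec (- a)" unfolding int_vec_def by auto
lemma int_vec_0: "int_vec 0" unfolding int_vec_def by auto

context tlm
begin

lemma qs_basis: assumes s: "\<sigma> \<in> SL"
  shows "\<exists>gs C'. zbasis (q ` \<sigma>) (Ms (q ` \<sigma>)) gs \<and> rat_poly_cone_k (length gs) C' \<and>
          homeomorphic_map (subtopology Ls (q ` \<sigma>)) (subtopology euclidean C') (evmap gs)"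
proof -
  obtain fs C where zb: "zbasis \<sigma> (LM \<sigma>) fs" and rc: "rat_poly_cone_k (length fs) C"
    and hm: "homeomorphic_map (subtopology L \<sigma>) (subtopology euclidean C) (evmap fs)"
    using SL_basis[OF s] by blast
  define k where "k = length fs"
  have M: "LM \<sigma> = range (intcomb \<sigma> fs)" using zb unfolding zbasis_def by blast
  have indf: "\<And>c. (\<forall>x\<in>\<sigma>. (\<Sum>i<k. of_int (c i) * (fs ! i) x) = 0) \<Longrightarrow> (\<forall>i<k. c i = 0)"
    using zb unfolding zbasis_def k_def by blast
  have imgC: "evmap fs ` \<sigma> = C" using homeomorphic_imp_surjective_map[OF hm] SL_sub[OF s]
    by (simp add: Int_absorb1)
  have stop: "x \<in> topspace L" if "x \<in> \<sigma>" for x using that SL_sub[OF s] by auto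
  define H where "H = {c. (\<forall>i\<ge>k. c i = 0) \<and> (\<exists>u kk. int_vec u \<and> (\<forall>x\<in>\<sigma>. (\<Sum>i<k. of_int (c i) * (fs!i) x) = gf p h u kk x))}"
  have zH: "zsubgroup H" unfolding zsubgroup_def
  proof (intro conjI ballI)
    show "0 \<in> H" unfolding H_def using int_vec_0 by (auto intro!: exI[of _ 0] exI[of _ "0::int"] simp: gf_def)
  next
    fix a b assume "a \<in> H" "b \<in> H"
    then obtain ua ka ub kb where ab: "\<forall>i\<ge>k. a i = 0" "\<forall>i\<ge>k. b i = 0" "int_vec ua" "int_vec ub"
      "\<forall>x\<in>\<sigma>. (\<Sum>i<k. of_int (a i) * (fs!i) x) = gf p h ua ka x"
      "\<forall>x\<in>\<sigma>. (\<Sum>i<k. of_int (b i) * (fs!i) x) = gf p h ub kb x" unfolding H_def by blast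
    have "\<forall>x\<in>\<sigma>. (\<Sum>i<k. of_int ((a + b) i) * (fs!i) x) = gf p h (ua + ub) (ka + kb) x"
      using ab(5,6) by (simp add: sum.distrib algebra_simps gf_def inner_add_left)
    then show "a + b \<in> H" unfolding H_def using ab(1,2) int_vec_add[OF ab(3,4)] by auto
  next
    fix a assume "a \<in> H"
    then obtain ua ka where ab: "\<forall>i\<ge>k. a i = 0" "int_vec ua"
      "\<forall>x\<in>\<sigma>. (\<Sum>i<k. of_int (a i) * (fs!i) x) = gf p h ua ka x" unfolding H_def by blast
    have "\<forall>x\<in>\<sigma>. (\<Sum>i<k. of_int ((- a) i) * (fs!i) x) = gf p h (- ua) (- ka) x"
      using ab(3) by (simp add: sum_negf gf_def algebra_simps)
    then show "- a \<in> H" unfolding H_def using ab(1) int_vec_neg[OF ab(2)] by auto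
  qed
  have supH: "\<forall>c\<in>H. \<forall>i\<ge>k. c i = 0" unfolding H_def by blast
  obtain hs where hs: "set hs \<subseteq> H" "H = range (lc hs)" "\<forall>c. lc hs c = 0 \<longrightarrow> (\<forall>j<length hs. c j = 0)"
    using subgroup_basis[OF zH supH] by blast
  define r where "r = length hs"
  have "\<forall>j. \<exists>uk. j < r \<longrightarrow> int_vec (fst uk) \<and> (\<forall>x\<in>\<sigma>. (\<Sum>i<k. of_int ((hs!j) i) * (fs!i) x) = gf p h (fst uk) (snd uk) x)"
  proof
    fix j
    show "\<exists>uk. j < r \<longrightarrow> int_vec (fst uk) \<and> (\<forall>x\<in>\<sigma>. (\<Sum>i<k. of_int ((hs!j) i) * (fs!i) x) = gf p h (fst uk) (snd uk) x)"
    proof (cases "j < r")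
      case True
      then have "hs!j \<in> H" using hs(1) unfolding r_def by auto
      then obtain u kk where "int_vec u" "\<forall>x\<in>\<sigma>. (\<Sum>i<k. of_int ((hs!j) i) * (fs!i) x) = gf p h u kk x"
        unfolding H_def by blast
      then show ?thesis by (intro exI[of _ "(u, kk)"]) simp
    qed simp
  qed
  then obtain UK where UK: "\<forall>j. j < r \<longrightarrow> int_vec (fst (UK j)) \<and> (\<forall>x\<in>\<sigma>. (\<Sum>i<k. of_int ((hs!j) i) * (fs!i) x) = gf p h (fst (UK j)) (snd (UK j)) x)"
    using choice[of "\<lambda>j uk. j < r \<longrightarrow> int_vec (fst uk) \<and> (\<forall>x\<in>\<sigma>. (\<Sum>i<k. of_int ((hs!j) i) * (fs!i) x) = gf p h (fst uk) (snd uk) x)"] by blast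
  define U where "U = (\<lambda>j. if j < r then fst (UK j) else 0)"
  define KK where "KK = (\<lambda>j. snd (UK j))"
  have Uint: "\<And>j. int_vec (U j)" unfolding U_def using UK int_vec_0 by auto
  define gs where "gs = map (\<lambda>j. gf p h (U j) (KK j)) [0..<r]"
  have lgs: "length gs = r" unfolding gs_def by simp
  have gsj: "gs!j = gf p h (U j) (KK j)" if "j < r" for j unfolding gs_def using that by simp
  have G1: "(gs!j) x = (\<Sum>i<k. of_int ((hs!j) i) * (fs!i) x)" if "j < r" "x \<in> \<sigma>" for j x
    using UK that unfolding gsj[OF that(1)] U_def KK_def by simp
  have G2: "(gs!j) (q x) = (gs!j) x" if "j < r" "x \<in> \<sigma>" for j x
    unfolding gsj[OF that(1)] using gf_q stop[OF that(2)] by simp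
  have lcsum: "(\<Sum>i<k. of_int (lc hs d i) * (fs!i) x) = (\<Sum>j<r. of_int (d j) * (gs!j) x)" if "x \<in> \<sigma>" for d x
  proof -
    have "(\<Sum>i<k. of_int (lc hs d i) * (fs!i) x) = (\<Sum>i<k. \<Sum>j<r. of_int (d j) * (of_int ((hs!j) i) * (fs!i) x))"
      unfolding lc_def r_def by (simp add: sum_distrib_left sum_distrib_right mult_ac)
    also have "\<dots> = (\<Sum>j<r. \<Sum>i<k. of_int (d j) * (of_int ((hs!j) i) * (fs!i) x))" by (rule sum.swap)
    also have "\<dots> = (\<Sum>j<r. of_int (d j) * (gs!j) x)"
      using G1[OF _ that] by (simp add: sum_distrib_left)
    finally show ?thesis .
  qed
  have icomb: "intcomb (q ` \<sigma>) gs d = zext (q ` \<sigma>) (gf p h (\<Sum>j<r. of_int (d j) *\<^sub>R U j) (\<Sum>j<r. d j * KK j))" for d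
  proof -
    have "(\<Sum>j<r. of_int (d j) * (gs!j) x) = (\<Sum>j<r. of_int (d j) * gf p h (U j) (KK j) x)" for x
      using gsj by simp
    then show ?thesis unfolding intcomb_def lgs by (simp add: zext_def gf_sum fun_eq_iff)
  qed
  have MA: "Ms (q ` \<sigma>) = range (intcomb (q ` \<sigma>) gs)"
  proof
    show "range (intcomb (q ` \<sigma>) gs) \<subseteq> Ms (q ` \<sigma>)"
      unfolding icomb Ms_def using int_vec_sum[of U, OF Uint] by blast
  next
    show "Ms (q ` \<sigma>) \<subseteq> range (intcomb (q ` \<sigma>) gs)"
    proof
      fix m assume "m \<in> Ms (q ` \<sigma>)"
      then obtain u kk where m: "m = zext (q ` \<sigma>) (gf p h u kk)" "int_vec u" unfolding Ms_def by blast
      obtain c where c: "zext \<sigma> (gf p h u kk) = intcomb \<sigma> fs c" using gM[OF s m(2)] M by auto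
      define c' where "c' = (\<lambda>i. if i < k then c i else 0)"
      have "\<forall>x\<in>\<sigma>. (\<Sum>i<k. of_int (c' i) * (fs!i) x) = gf p h u kk x"
      proof
        fix x assume x: "x \<in> \<sigma>"
        have "gf p h u kk x = intcomb \<sigma> fs c x" using fun_cong[OF c, of x] x by (simp add: zext_def)
        also have "\<dots> = (\<Sum>i<k. of_int (c' i) * (fs!i) x)" unfolding intcomb_def zext_def c'_def k_def using x by simp
        finally show "(\<Sum>i<k. of_int (c' i) * (fs!i) x) = gf p h u kk x" by simp
      qed
      then have "c' \<in> H" unfolding H_def c'_def using m(2) by auto
      then obtain d where d: "c' = lc hs d" using hs(2) by auto
      have e: "gf p h u kk x = (\<Sum>j<r. of_int (d j) * (gs!j) x)" if "x \<in> \<sigma>" for x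
        using \<open>\<forall>x\<in>\<sigma>. _\<close> that lcsum[OF that, of d] d by simp
      have "m = intcomb (q ` \<sigma>) gs d"
      proof
        fix y
        show "m y = intcomb (q ` \<sigma>) gs d y"
        proof (cases "y \<in> q ` \<sigma>")
          case True
          then obtain x where x: "x \<in> \<sigma>" "y = q x" by auto
          have "m y = gf p h u kk x" unfolding m(1) using True x gf_q stop by (simp add: zext_def)
          also have "\<dots> = (\<Sum>j<r. of_int (d j) * (gs!j) y)" using e[OF x(1)] G2 x by simp
          finally show ?thesis unfolding intcomb_def zext_def lgs using True by simp
        next
          case False then show ?thesis unfolding m(1) intcomb_def zext_def by simp
        qed
      qed
      then show "m \<in> range (intcomb (q ` \<sigma>) gs)" by simp
    qed
  qed
  have indg: "\<forall>d. (\<forall>x\<in>q ` \<sigma>. (\<Sum>j<length gs. of_int (d j) * (gs ! j) x) = 0) \<longrightarrow> (\<forall>j<length gs. d j = 0)"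
  proof (rule allI, rule impI)
    fix d assume a: "\<forall>x\<in>q ` \<sigma>. (\<Sum>j<length gs. of_int (d j) * (gs ! j) x) = 0"
    have "\<forall>x\<in>\<sigma>. (\<Sum>i<k. of_int (lc hs d i) * (fs!i) x) = 0"
    proof
      fix x assume x: "x \<in> \<sigma>"
      have "(\<Sum>j<r. of_int (d j) * (gs ! j) (q x)) = 0" using a x lgs by auto
      then show "(\<Sum>i<k. of_int (lc hs d i) * (fs!i) x) = 0" using lcsum[OF x] G2 x by simp
    qed
    then have l1: "\<forall>i<k. lc hs d i = 0" using indf by blast
    have "lc hs d \<in> H" using lc_in[OF zH hs(1)] .
    then have l2: "\<forall>i\<ge>k. lc hs d i = 0" using supH by blast
    have "lc hs d = 0" using l1 l2 by (intro ext) (metis le_less_linear zero_fun_apply)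
    then show "\<forall>j<length gs. d j = 0" using hs(3) lgs r_def by auto
  qed
  have ZB: "zbasis (q ` \<sigma>) (Ms (q ` \<sigma>)) gs" unfolding zbasis_def using MA indg by blast
  define A where "A = (\<lambda>(v::nat \<Rightarrow> real) j. if j < r then \<Sum>i<k. of_int ((hs!j) i) * v i else 0)"
  have rcA: "rat_poly_cone_k r (A ` C)" using rpck_image[OF rc, of A r] unfolding A_def k_def by simp
  have evA: "evmap gs (q x) = A (evmap fs x)" if "x \<in> \<sigma>" for x
  proof
    fix j show "evmap gs (q x) j = A (evmap fs x) j"
      unfolding evmap_def A_def lgs using G1[OF _ that] G2[OF _ that] k_def by simp
  qed
  have img: "evmap gs ` (q ` \<sigma>) = A ` C"
  proof -
    have "evmap gs ` (q ` \<sigma>) = (\<lambda>x. evmap gs (q x)) ` \<sigma>" by (simp add: image_image)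
    also have "\<dots> = (\<lambda>x. A (evmap fs x)) ` \<sigma>" using evA by (auto intro!: image_cong)
    also have "\<dots> = A ` C" unfolding imgC[symmetric] by (simp add: image_image)
    finally show ?thesis .
  qed
  have "\<forall>l. \<exists>d. \<forall>y\<in>q ` \<sigma>. p y $ l = (\<Sum>j<r. of_int (d j) * (gs!j) y)"
  proof
    fix l
    have iv: "int_vec (axis l 1 :: real^'n)" unfolding int_vec_def axis_def by auto
    have "zext (q ` \<sigma>) (gf p h (axis l 1) 0) \<in> Ms (q ` \<sigma>)" unfolding Ms_def using iv by blast
    then obtain d where d: "zext (q ` \<sigma>) (gf p h (axis l 1) 0) = intcomb (q ` \<sigma>) gs d" using MA by auto
    have "\<forall>y\<in>q ` \<sigma>. p y $ l = (\<Sum>j<r. of_int (d j) * (gs!j) y)"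
    proof
      fix y assume y: "y \<in> q ` \<sigma>"
      have "gf p h (axis l 1) 0 y = intcomb (q ` \<sigma>) gs d y" using fun_cong[OF d, of y] y by (simp add: zext_def)
      then show "p y $ l = (\<Sum>j<r. of_int (d j) * (gs!j) y)"
        unfolding gf_def intcomb_def zext_def lgs using y by (simp add: inner_axis')
    qed
    then show "\<exists>d. \<forall>y\<in>q ` \<sigma>. p y $ l = (\<Sum>j<r. of_int (d j) * (gs!j) y)" by blast
  qed
  then obtain dd where dd: "\<forall>l. \<forall>y\<in>q ` \<sigma>. p y $ l = (\<Sum>j<r. of_int (dd l j) * (gs!j) y)" by metis
  define Bm where "Bm = (\<lambda>c::nat \<Rightarrow> real. \<chi> l. \<Sum>j<r. of_int (dd l j) * c j)"
  have Bp: "Bm (evmap gs y) = p y" if "y \<in> q ` \<sigma>" for y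
  proof -
    have "\<forall>l. p y $ l = (\<Sum>j<r. of_int (dd l j) * (gs!j) y)" using dd that by blast
    then show ?thesis unfolding Bm_def evmap_def lgs by (simp add: vec_eq_iff)
  qed
  obtain g where g: "continuous_map (subtopology euclidean (p ` \<sigma>)) (subtopology L \<sigma>) g"
    "\<And>x. x \<in> \<sigma> \<Longrightarrow> g (p x) = x" "\<And>y. y \<in> p ` \<sigma> \<Longrightarrow> p (g y) = y" "\<And>y. y \<in> p ` \<sigma> \<Longrightarrow> g y \<in> \<sigma>"
    using p_inv[OF s] by blast
  have ts: "topspace (subtopology Ls (q ` \<sigma>)) = q ` \<sigma>" using qs_sub[OF s] topspace_Ls by (auto simp: Int_absorb1)
  have bck: "q (g (p y)) = y" if yy: "y \<in> q ` \<sigma>" for y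
  proof -
    obtain z where z: "z \<in> \<sigma>" "y = q z" using yy by auto
    have "p y = p z" using z stop q_p by auto
    then show ?thesis using z g(2) by simp
  qed
  have "homeomorphic_maps (subtopology Ls (q ` \<sigma>)) (subtopology euclidean (A ` C)) (evmap gs) (\<lambda>c. q (g (Bm c)))"
    unfolding homeomorphic_maps_def
  proof (intro conjI ballI)
    have "continuous_map (subtopology Ls (q ` \<sigma>)) euclidean (evmap gs)"
      unfolding euclidean_product_topology[symmetric] continuous_map_componentwise_UNIV
    proof
      fix j
      show "continuous_map (subtopology Ls (q ` \<sigma>)) euclideanreal (\<lambda>x. evmap gs x j)"
      proof (cases "j < r")
        case True
        have "continuous_map (subtopology Ls (q ` \<sigma>)) euclideanreal (gf p h (U j) (KK j))"
          by (intro gf_cont continuous_map_from_subtopology p_cont_s h_cont_s)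
        then show ?thesis unfolding evmap_def lgs using True gsj by simp
      next
        case False then show ?thesis unfolding evmap_def lgs by simp
      qed
    qed
    then show "continuous_map (subtopology Ls (q ` \<sigma>)) (subtopology euclidean (A ` C)) (evmap gs)"
      using img ts by (intro continuous_map_into_subtopology) auto
  next
    have cB: "continuous_map euclidean euclidean Bm"
      unfolding continuous_map_iff_continuous2 Bm_def
      by (intro continuous_on_vec_lambda continuous_on_sum continuous_on_mult continuous_on_const continuous_on_product_coordinates)
    have "continuous_map (subtopology euclidean (A ` C)) (subtopology euclidean (p ` \<sigma>)) Bm"
    proof (intro continuous_map_into_subtopology continuous_map_from_subtopology cB)
      show "Bm \<in> topspace (subtopology euclidean (A ` C)) \<rightarrow> p ` \<sigma>"
      proof
        fix c assume "c \<in> topspace (subtopology euclidean (A ` C))"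
        then have "c \<in> evmap gs ` (q ` \<sigma>)" using img by simp
        then obtain y where "y \<in> q ` \<sigma>" "c = evmap gs y" by blast
        then show "Bm c \<in> p ` \<sigma>" using Bp p_qs[OF s] by auto
      qed
    qed
    moreover have "continuous_map (subtopology L \<sigma>) (subtopology Ls (q ` \<sigma>)) q"
      using continuous_map_from_subtopology[OF q_cont] SL_sub[OF s]
      by (intro continuous_map_into_subtopology) auto
    ultimately have "continuous_map (subtopology euclidean (A ` C)) (subtopology Ls (q ` \<sigma>)) (q \<circ> g \<circ> Bm)"
      using g(1) by (intro continuous_map_compose) auto
    then show "continuous_map (subtopology euclidean (A ` C)) (subtopology Ls (q ` \<sigma>)) (\<lambda>c. q (g (Bm c)))"
      by (simp add: o_def)
  next
    fix y assume "y \<in> topspace (subtopology Ls (q ` \<sigma>))"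
    then have y: "y \<in> q ` \<sigma>" using ts by simp
    show "q (g (Bm (evmap gs y))) = y" using Bp[OF y] bck[OF y] by simp
  next
    fix c assume "c \<in> topspace (subtopology euclidean (A ` C))"
    then have "c \<in> evmap gs ` (q ` \<sigma>)" using img by simp
    then obtain y where y: "y \<in> q ` \<sigma>" "c = evmap gs y" by blast
    show "evmap gs (q (g (Bm c))) = c" using y Bp bck by simp
  qed
  then have "homeomorphic_map (subtopology Ls (q ` \<sigma>)) (subtopology euclidean (A ` C)) (evmap gs)"
    using homeomorphic_map_maps by blast
  then show ?thesis using ZB rcA lgs by blast
qed

end

context tlm
begin

lemma Ss_finite: "finite Ss" unfolding Ss_def using SL_finite by simp

lemma HDs: assumes s: "\<sigma> \<in> SL" and x: "x \<in> cc_relint Ms (q ` \<sigma>)" shows "p x \<in> relS (p ` \<sigma>)"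
  unfolding relS_def
proof (intro CollectI conjI allI impI)
  show "p x \<in> p ` \<sigma>" using x p_qs[OF s] unfolding cc_relint_def by blast
  fix F assume a: "cone_face (p ` \<sigma>) F \<and> p x \<in> F"
  obtain u where u: "int_vec u" "\<forall>y\<in>p ` \<sigma>. 0 \<le> u \<bullet> y" "F = {y\<in>p ` \<sigma>. u \<bullet> y = 0}"
    using RFS[OF p_homeo(1)[OF s]] a by blast
  have gfe: "gf p h u 0 y = u \<bullet> p y" for y unfolding gf_def by simp
  have nn: "\<forall>y\<in>q ` \<sigma>. 0 \<le> zext (q ` \<sigma>) (gf p h u 0) y"
  proof
    fix y assume y: "y \<in> q ` \<sigma>"
    then have "p y \<in> p ` \<sigma>" using p_qs[OF s] by blast
    then have "0 \<le> u \<bullet> p y" using u(2) by blast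
    then show "0 \<le> zext (q ` \<sigma>) (gf p h u 0) y" using y unfolding zext_def gfe by simp
  qed
  have "cc_face Ms (q ` \<sigma>) {y\<in>q ` \<sigma>. zext (q ` \<sigma>) (gf p h u 0) y = 0}"
    unfolding cc_face_def Ms_def using u(1) nn by blast
  moreover have "x \<in> {y\<in>q ` \<sigma>. zext (q ` \<sigma>) (gf p h u 0) y = 0}"
    using x a u(3) unfolding cc_relint_def zext_def gfe by auto
  ultimately have E: "{y\<in>q ` \<sigma>. zext (q ` \<sigma>) (gf p h u 0) y = 0} = q ` \<sigma>"
    using x unfolding cc_relint_def by blast
  have "\<forall>y\<in>q ` \<sigma>. u \<bullet> p y = 0"
  proof
    fix y assume "y \<in> q ` \<sigma>"
    then have "y \<in> {y\<in>q ` \<sigma>. zext (q ` \<sigma>) (gf p h u 0) y = 0}" using E by simp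
    then show "u \<bullet> p y = 0" unfolding zext_def gfe by (simp split: if_split_asm)
  qed
  have "\<forall>y\<in>p ` \<sigma>. u \<bullet> y = 0"
  proof
    fix y assume "y \<in> p ` \<sigma>"
    then have "y \<in> p ` q ` \<sigma>" using p_qs[OF s] by simp
    then obtain w where w: "w \<in> q ` \<sigma>" "y = p w" by blast
    have "u \<bullet> p w = 0" using w(1) \<open>\<forall>y\<in>q ` \<sigma>. u \<bullet> p y = 0\<close> by blast
    then show "u \<bullet> y = 0" using w(2) by simp
  qed
  then show "F = p ` \<sigma>" using u(3) by auto
qed

lemma Ss_face: assumes s: "\<sigma>' \<in> Ss" and f: "cc_face Ms \<sigma>' \<tau>'"
  shows "\<tau>' \<in> Ss \<and> Ms \<tau>' = zext \<tau>' ` Ms \<sigma>'"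
proof
  obtain \<sigma> where sg: "\<sigma> \<in> SL" "\<sigma>' = q ` \<sigma>" using s unfolding Ss_def by auto
  obtain m where m: "m \<in> Ms \<sigma>'" "\<forall>x\<in>\<sigma>'. 0 \<le> m x" "\<tau>' = {x\<in>\<sigma>'. m x = 0}"
    using f unfolding cc_face_def by blast
  obtain u k where uk: "m = zext \<sigma>' (gf p h u k)" "int_vec u" using m(1) unfolding Ms_def by blast
  have stop: "z \<in> topspace L" if "z \<in> \<sigma>" for z using that SL_sub[OF sg(1)] by auto
  define Z where "Z = {z\<in>\<sigma>. zext \<sigma> (gf p h u k) z = 0}"
  have nn: "\<forall>z\<in>\<sigma>. 0 \<le> zext \<sigma> (gf p h u k) z"
  proof
    fix z assume z: "z \<in> \<sigma>"
    have "0 \<le> m (q z)" using m(2) sg(2) z by auto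
    then show "0 \<le> zext \<sigma> (gf p h u k) z" using z uk(1) sg(2) gf_q[OF stop[OF z]] by (simp add: zext_def)
  qed
  have "cc_face LM \<sigma> Z" unfolding cc_face_def Z_def using gM[OF sg(1) uk(2)] nn by blast
  then have "Z \<in> SL" using SL_face[OF sg(1)] by blast
  moreover have "q ` Z = \<tau>'"
  proof
    show "q ` Z \<subseteq> \<tau>'"
    proof
      fix y assume "y \<in> q ` Z"
      then obtain z where z: "z \<in> \<sigma>" "zext \<sigma> (gf p h u k) z = 0" "y = q z" unfolding Z_def by auto
      have "gf p h u k y = 0" using z gf_q[OF stop[OF z(1)]] by (simp add: zext_def)
      then show "y \<in> \<tau>'" unfolding m(3) uk(1) sg(2) using z by (simp add: zext_def)
    qed
    show "\<tau>' \<subseteq> q ` Z"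
    proof
      fix y assume "y \<in> \<tau>'"
      then obtain z where z: "z \<in> \<sigma>" "y = q z" "m y = 0" using m(3) sg(2) by auto
      then have "zext \<sigma> (gf p h u k) z = 0" using uk(1) sg(2) gf_q[OF stop[OF z(1)]] by (simp add: zext_def)
      then show "y \<in> q ` Z" unfolding Z_def using z by auto
    qed
  qed
  ultimately show "\<tau>' \<in> Ss" unfolding Ss_def by blast
  have sub: "\<tau>' \<subseteq> \<sigma>'" using m(3) by auto
  have zz: "zext \<tau>' (zext \<sigma>' g) = zext \<tau>' g" for g using sub unfolding zext_def by (auto simp: fun_eq_iff)
  show "Ms \<tau>' = zext \<tau>' ` Ms \<sigma>'"
  proof
    show "Ms \<tau>' \<subseteq> zext \<tau>' ` Ms \<sigma>'"
    proof
      fix a assume "a \<in> Ms \<tau>'"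
      then obtain u k where "a = zext \<tau>' (gf p h u k)" "int_vec u" unfolding Ms_def by blast
      then show "a \<in> zext \<tau>' ` Ms \<sigma>'" unfolding Ms_def using zz by (auto intro!: image_eqI[of _ _ "zext \<sigma>' (gf p h u k)"])
    qed
    show "zext \<tau>' ` Ms \<sigma>' \<subseteq> Ms \<tau>'" unfolding Ms_def using zz by auto
  qed
qed

lemma Ss_relint_unique:
  assumes s1: "\<sigma>1 \<in> SL" and s2: "\<sigma>2 \<in> SL"
    and x1: "x \<in> cc_relint Ms (q ` \<sigma>1)" and x2: "x \<in> cc_relint Ms (q ` \<sigma>2)"
  shows "q ` \<sigma>1 = q ` \<sigma>2"
proof -
  have "p x \<in> relS (p ` \<sigma>1)" "p x \<in> relS (p ` \<sigma>2)" using HDs s1 s2 x1 x2 by auto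
  then have pe: "p ` \<sigma>1 = p ` \<sigma>2" using FR p_homeo(1) s1 s2 by blast
  obtain z1 where z1: "z1 \<in> \<sigma>1" "x = q z1" using x1 unfolding cc_relint_def by auto
  obtain z2 where z2: "z2 \<in> \<sigma>2" "x = q z2" using x2 unfolding cc_relint_def by auto
  have t: "z1 \<in> topspace L" "z2 \<in> topspace L" using z1 z2 SL_sub s1 s2 by auto
  have rl: "rel z1 z2" using q_iff[OF t] z1 z2 by simp
  have "p z1 \<in> relS (p ` \<sigma>1)" using \<open>p x \<in> relS (p ` \<sigma>1)\<close> z1 q_p[OF t(1)] by simp
  then show ?thesis using Glue[OF s1 s2 pe z1(1) z2(1) _ rl] by blast
qed

lemma Ss_relint_exists:
  assumes x: "x \<in> R" shows "\<exists>\<sigma>'. \<sigma>' \<in> Ss \<and> x \<in> cc_relint Ms \<sigma>'"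
proof -
  define Cs where "Cs = {\<sigma>'\<in>Ss. x \<in> \<sigma>'}"
  have fin: "finite Cs" unfolding Cs_def using Ss_finite by simp
  have xt: "x \<in> topspace L" using x R_sub by auto
  then obtain \<sigma> where "\<sigma> \<in> SL" "x \<in> \<sigma>" using topspace_Union by auto
  then have "q ` \<sigma> \<in> Cs" unfolding Cs_def Ss_def using R_q[OF x] by (auto intro: image_eqI[of x q x])
  then have ne: "Cs \<noteq> {}" by auto
  obtain m where m: "m \<in> Cs" "\<forall>b\<in>Cs. b \<le> m \<longrightarrow> m = b" using finite_has_minimal[OF fin ne] by blast
  have "x \<in> cc_relint Ms m" unfolding cc_relint_def
  proof (intro CollectI conjI allI impI)
    show "x \<in> m" using m(1) unfolding Cs_def by auto
    fix \<tau>' assume a: "cc_face Ms m \<tau>' \<and> x \<in> \<tau>'"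
    then have "\<tau>' \<in> Ss" using Ss_face m(1) unfolding Cs_def by blast
    moreover have "\<tau>' \<subseteq> m" using a unfolding cc_face_def by auto
    ultimately show "\<tau>' = m" using m(2) a unfolding Cs_def by auto
  qed
  then show ?thesis using m(1) unfolding Cs_def by auto
qed

lemma cc_s: "cone_complex Ls Ss Ms"
  unfolding cone_complex_def
proof (intro conjI ballI allI impI)
  show "finite Ss" by (rule Ss_finite)
next
  fix \<sigma>' assume "\<sigma>' \<in> Ss"
  then obtain \<sigma> where s: "\<sigma> \<in> SL" "\<sigma>' = q ` \<sigma>" unfolding Ss_def by auto
  show "\<sigma>' \<subseteq> topspace Ls" using qs_sub[OF s(1)] s(2) topspace_Ls by simp
  show "closedin Ls \<sigma>'" using qs_closed[OF s(1)] s(2) by simp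
next
  fix \<sigma>' m assume a: "\<sigma>' \<in> Ss" "m \<in> Ms \<sigma>'"
  then obtain u k where uk: "m = zext \<sigma>' (gf p h u k)" unfolding Ms_def by blast
  have "continuous_map (subtopology Ls \<sigma>') euclideanreal (gf p h u k)"
    by (intro gf_cont continuous_map_from_subtopology p_cont_s h_cont_s)
  then show "continuous_map (subtopology Ls \<sigma>') euclideanreal m"
    by (rule continuous_map_eq) (simp add: uk zext_def)
next
  fix \<sigma>' assume "\<sigma>' \<in> Ss"
  then obtain \<sigma> where s: "\<sigma> \<in> SL" "\<sigma>' = q ` \<sigma>" unfolding Ss_def by auto
  show "\<exists>fs C. zbasis \<sigma>' (Ms \<sigma>') fs \<and> rat_poly_cone_k (length fs) C \<and>
          homeomorphic_map (subtopology Ls \<sigma>') (subtopology euclidean C) (evmap fs)"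
    using qs_basis[OF s(1)] s(2) by simp
next
  fix \<sigma>' \<tau>' assume "\<sigma>' \<in> Ss" "cc_face Ms \<sigma>' \<tau>'"
  then show "\<tau>' \<in> Ss" "Ms \<tau>' = zext \<tau>' ` Ms \<sigma>'" using Ss_face by auto
next
  fix x assume "x \<in> topspace Ls"
  then have x: "x \<in> R" using topspace_Ls by simp
  obtain \<sigma>' where e: "\<sigma>' \<in> Ss" "x \<in> cc_relint Ms \<sigma>'" using Ss_relint_exists[OF x] by blast
  show "\<exists>!\<sigma>. \<sigma> \<in> Ss \<and> x \<in> cc_relint Ms \<sigma>"
  proof (rule ex1I[of _ \<sigma>'])
    show "\<sigma>' \<in> Ss \<and> x \<in> cc_relint Ms \<sigma>'" using e by simp
    fix \<tau>' assume "\<tau>' \<in> Ss \<and> x \<in> cc_relint Ms \<tau>'"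
    then show "\<tau>' = \<sigma>'" using e Ss_relint_unique unfolding Ss_def by blast
  qed
qed

end

context tlm
begin

lemma class_fin: "finite {z\<in>topspace L. q z = x}"
proof -
  have "{z\<in>topspace L. q z = x} \<subseteq> {z\<in>topspace L. p z = p x}" using q_p by auto
  then show ?thesis using fib_finite finite_subset by blast
qed

lemma mus_pos: assumes x: "x \<in> R" shows "0 < mus x"
proof -
  have xt: "x \<in> topspace L" using x R_sub by auto
  have "x \<in> {z\<in>topspace L. q z = x}" using xt R_q[OF x] by simp
  then have "mu x \<le> mus x" unfolding mus_def trace_def using class_fin by (intro member_le_sum) auto
  then show ?thesis using wt_pos[OF xt] by simp
qed

lemma class_desc:
  assumes s: "\<sigma> \<in> SL" and x: "x \<in> cc_relint Ms (q ` \<sigma>)"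
  shows "{z\<in>topspace L. q z = x} = (\<lambda>\<kappa>. inv_into \<kappa> p (p x)) ` {\<kappa>\<in>SL. q ` \<kappa> = q ` \<sigma>}"
    and "inj_on (\<lambda>\<kappa>. inv_into \<kappa> p (p x)) {\<kappa>\<in>SL. q ` \<kappa> = q ` \<sigma>}"
    and "\<And>\<kappa>. \<kappa> \<in> {\<kappa>\<in>SL. q ` \<kappa> = q ` \<sigma>} \<Longrightarrow> inv_into \<kappa> p (p x) \<in> cc_relint LM \<kappa>"
proof -
  define y0 where "y0 = p x"
  have y0: "y0 \<in> relS (p ` \<sigma>)" unfolding y0_def using HDs[OF s x] .
  obtain z0 where z0: "z0 \<in> \<sigma>" "x = q z0" using x unfolding cc_relint_def by auto
  have z0t: "z0 \<in> topspace L" using z0 SL_sub[OF s] by auto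
  have pK: "p ` \<kappa> = p ` \<sigma>" if "\<kappa> \<in> SL" "q ` \<kappa> = q ` \<sigma>" for \<kappa>
    using p_qs[OF that(1)] p_qs[OF s] that(2) by simp
  have inrel: "inv_into \<kappa> p y0 \<in> cc_relint LM \<kappa>" "inv_into \<kappa> p y0 \<in> \<kappa>" "p (inv_into \<kappa> p y0) = y0"
    if k: "\<kappa> \<in> SL" "q ` \<kappa> = q ` \<sigma>" for \<kappa>
  proof -
    have yk: "y0 \<in> p ` \<kappa>" using y0 pK[OF k] unfolding relS_def by auto
    show i: "inv_into \<kappa> p y0 \<in> \<kappa>" using yk by (simp add: inv_into_into)
    show pe: "p (inv_into \<kappa> p y0) = y0" using yk by (simp add: f_inv_into_f)
    show "inv_into \<kappa> p y0 \<in> cc_relint LM \<kappa>" using ED[OF k(1) i] pe y0 pK[OF k] by simp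
  qed
  then show "\<And>\<kappa>. \<kappa> \<in> {\<kappa>\<in>SL. q ` \<kappa> = q ` \<sigma>} \<Longrightarrow> inv_into \<kappa> p (p x) \<in> cc_relint LM \<kappa>"
    unfolding y0_def by blast
  show "inj_on (\<lambda>\<kappa>. inv_into \<kappa> p (p x)) {\<kappa>\<in>SL. q ` \<kappa> = q ` \<sigma>}"
  proof
    fix k1 k2 assume k: "k1 \<in> {\<kappa>\<in>SL. q ` \<kappa> = q ` \<sigma>}" "k2 \<in> {\<kappa>\<in>SL. q ` \<kappa> = q ` \<sigma>}"
      "inv_into k1 p (p x) = inv_into k2 p (p x)"
    define w where "w = inv_into k1 p y0"
    have w1: "w \<in> cc_relint LM k1" "w \<in> k1" using inrel k(1) unfolding w_def by auto
    have w2: "w \<in> cc_relint LM k2" using inrel k(2) k(3) unfolding w_def y0_def by auto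
    have "w \<in> topspace L" using w1(2) SL_sub k(1) by auto
    then show "k1 = k2" using SL_relint w1(1) w2 k(1,2) by blast
  qed
  show "{z\<in>topspace L. q z = x} = (\<lambda>\<kappa>. inv_into \<kappa> p (p x)) ` {\<kappa>\<in>SL. q ` \<kappa> = q ` \<sigma>}"
  proof
    show "{z\<in>topspace L. q z = x} \<subseteq> (\<lambda>\<kappa>. inv_into \<kappa> p (p x)) ` {\<kappa>\<in>SL. q ` \<kappa> = q ` \<sigma>}"
    proof
      fix z assume "z \<in> {z\<in>topspace L. q z = x}"
      then have z: "z \<in> topspace L" "q z = x" by auto
      obtain \<kappa> where k: "\<kappa> \<in> SL" "z \<in> cc_relint LM \<kappa>" using SL_relint[OF z(1)] by blast
      have zk: "z \<in> \<kappa>" using k(2) unfolding cc_relint_def by auto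
      have pz: "p z = y0" unfolding y0_def using z q_p by auto
      have "p z \<in> relS (p ` \<kappa>)" using HD[OF k] .
      then have pk: "p ` \<kappa> = p ` \<sigma>" using FR[OF p_homeo(1)[OF k(1)] p_homeo(1)[OF s]] y0 pz by simp
      have "rel z z0" using q_iff[OF z(1) z0t] z(2) z0(2) by simp
      then have "q ` \<kappa> = q ` \<sigma>" using Glue[OF k(1) s pk zk z0(1)] HD[OF k] by blast
      moreover have "inv_into \<kappa> p (p x) = z" using inv_into_f_f[OF p_inj[OF k(1)] zk] pz unfolding y0_def by simp
      ultimately show "z \<in> (\<lambda>\<kappa>. inv_into \<kappa> p (p x)) ` {\<kappa>\<in>SL. q ` \<kappa> = q ` \<sigma>}" using k(1) by force
    qed
    show "(\<lambda>\<kappa>. inv_into \<kappa> p (p x)) ` {\<kappa>\<in>SL. q ` \<kappa> = q ` \<sigma>} \<subseteq> {z\<in>topspace L. q z = x}"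
    proof
      fix z assume "z \<in> (\<lambda>\<kappa>. inv_into \<kappa> p (p x)) ` {\<kappa>\<in>SL. q ` \<kappa> = q ` \<sigma>}"
      then obtain \<kappa> where k: "\<kappa> \<in> SL" "q ` \<kappa> = q ` \<sigma>" "z = inv_into \<kappa> p y0" unfolding y0_def by auto
      have zk: "z \<in> \<kappa>" "p z = y0" using inrel[OF k(1,2)] k(3) by auto
      have zt: "z \<in> topspace L" using zk SL_sub k(1) by auto
      have "q z \<in> q ` \<sigma>" using zk k(2) by blast
      moreover have "x \<in> q ` \<sigma>" using z0 by auto
      moreover have "p (q z) = p x" using q_p[OF zt] zk unfolding y0_def by simp
      ultimately have "q z = x" using p_inj_s[OF s] by (meson inj_onD)
      then show "z \<in> {z\<in>topspace L. q z = x}" using zt by simp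
    qed
  qed
qed

lemma mus_relint: assumes s: "\<sigma> \<in> SL" and x: "x \<in> cc_relint Ms (q ` \<sigma>)"
  shows "mus x = (\<Sum>\<kappa>\<in>{\<kappa>\<in>SL. q ` \<kappa> = q ` \<sigma>}. mu (inv_into \<kappa> p (p x)))"
proof -
  have "mus x = sum mu ((\<lambda>\<kappa>. inv_into \<kappa> p (p x)) ` {\<kappa>\<in>SL. q ` \<kappa> = q ` \<sigma>})"
    unfolding mus_def trace_def class_desc(1)[OF s x] ..
  also have "\<dots> = (\<Sum>\<kappa>\<in>{\<kappa>\<in>SL. q ` \<kappa> = q ` \<sigma>}. mu (inv_into \<kappa> p (p x)))"
    using sum.reindex[OF class_desc(2)[OF s x]] by (simp add: o_def)
  finally show ?thesis .
qed

lemma wt_s: "cc_weight Ls Ss Ms mus"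
  unfolding cc_weight_def
proof (intro conjI ballI)
  fix x assume "x \<in> topspace Ls" then show "0 < mus x" using mus_pos topspace_Ls by simp
next
  fix \<sigma>' x y assume a: "\<sigma>' \<in> Ss" "x \<in> cc_relint Ms \<sigma>'" "y \<in> cc_relint Ms \<sigma>'"
  then obtain \<sigma> where s: "\<sigma> \<in> SL" "\<sigma>' = q ` \<sigma>" unfolding Ss_def by auto
  have "mu (inv_into \<kappa> p (p x)) = mu (inv_into \<kappa> p (p y))" if "\<kappa> \<in> {\<kappa>\<in>SL. q ` \<kappa> = q ` \<sigma>}" for \<kappa>
    using wt_const that class_desc(3)[OF s(1)] a(2,3) s(2) by blast
  then have eq: "\<And>\<kappa>. \<kappa> \<in> {\<kappa>\<in>SL. q ` \<kappa> = q ` \<sigma>} \<Longrightarrow> mu (inv_into \<kappa> p (p x)) = mu (inv_into \<kappa> p (p y))" by blast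
  have "mus x = (\<Sum>\<kappa>\<in>{\<kappa>\<in>SL. q ` \<kappa> = q ` \<sigma>}. mu (inv_into \<kappa> p (p x)))" using mus_relint[OF s(1)] a(2) s(2) by simp
  also have "\<dots> = (\<Sum>\<kappa>\<in>{\<kappa>\<in>SL. q ` \<kappa> = q ` \<sigma>}. mu (inv_into \<kappa> p (p y)))" by (rule sum.cong[OF refl eq])
  also have "\<dots> = mus y" using mus_relint[OF s(1)] a(3) s(2) by simp
  finally show "mus x = mus y" .
qed

lemma mor_s: "cc_morphism Ls Ss Ms euclidean Sg fanM p"
  unfolding cc_morphism_def
proof (intro conjI ballI p_cont_s)
  fix \<sigma>' assume "\<sigma>' \<in> Ss"
  then obtain \<sigma> where s: "\<sigma> \<in> SL" "\<sigma>' = q ` \<sigma>" unfolding Ss_def by auto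
  have "p ` \<sigma>' \<subseteq> p ` \<sigma> \<and> (\<forall>m\<in>fanM (p ` \<sigma>). zext \<sigma>' (m \<circ> p) \<in> Ms \<sigma>')"
  proof (intro conjI ballI)
    show "p ` \<sigma>' \<subseteq> p ` \<sigma>" using p_qs[OF s(1)] s(2) by simp
    fix m assume "m \<in> fanM (p ` \<sigma>)"
    then obtain u where u: "m = zext (p ` \<sigma>) (\<lambda>x. u \<bullet> x)" "int_vec u" unfolding fanM_def by blast
    have "zext \<sigma>' (m \<circ> p) = zext \<sigma>' (gf p h u 0)"
      using p_qs[OF s(1)] s(2) unfolding u(1) zext_def gf_def by (auto simp: fun_eq_iff)
    then show "zext \<sigma>' (m \<circ> p) \<in> Ms \<sigma>'" unfolding Ms_def using u(2) by blast
  qed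
  then show "\<exists>\<tau>\<in>Sg. p ` \<sigma>' \<subseteq> \<tau> \<and> (\<forall>m\<in>fanM \<tau>. zext \<sigma>' (m \<circ> p) \<in> Ms \<sigma>')"
    using p_homeo(1)[OF s(1)] by blast
qed

lemma trace_group:
  assumes "finite S" "finite T" "q ` S \<subseteq> T" "\<And>x'. x' \<in> T \<Longrightarrow> {x\<in>S. q x = x'} = {x\<in>topspace L. q x = x'}"
  shows "(\<Sum>x'\<in>T. mus x') = sum mu S"
proof -
  have "(\<Sum>x'\<in>T. mus x') = (\<Sum>x'\<in>T. sum mu {x\<in>S. q x = x'})"
    unfolding mus_def trace_def using assms(4) by simp
  also have "\<dots> = sum mu S" using sum.group[OF assms(1-3), of mu] by simp
  finally show ?thesis .
qed

lemma trace_s: "trace p mus R y = r"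
proof -
  have "trace p mus R y = sum mu {x\<in>topspace L. p x = y}"
    unfolding trace_def
  proof (rule trace_group)
    show "finite {x\<in>topspace L. p x = y}" by (rule fib_finite)
    show "finite {x\<in>R. p x = y}" by (rule finite_subset[OF _ fib_finite[of y]]) (use R_sub in auto)
    show "q ` {x\<in>topspace L. p x = y} \<subseteq> {x\<in>R. p x = y}" unfolding R_def using q_p by auto
    fix x' assume "x' \<in> {x\<in>R. p x = y}"
    then show "{x\<in>{x\<in>topspace L. p x = y}. q x = x'} = {x\<in>topspace L. q x = x'}" using q_p by auto
  qed
  then show ?thesis using trr[of y] unfolding trace_def by simp
qed

lemma comp_s:
  assumes U: "openin euclidean U" "connectedin euclidean U"
    and V: "V \<in> connected_components_of (subtopology Ls {x\<in>topspace Ls. p x \<in> U})"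
    and yz: "y \<in> U" "z \<in> U"
  shows "trace p mus V y = trace p mus V z"
proof -
  define W where "W = {x\<in>topspace L. p x \<in> U}"
  define X where "X = subtopology L W"
  define Y where "Y = subtopology Ls {x\<in>topspace Ls. p x \<in> U}"
  define P where "P = {x\<in>topspace L. q x \<in> V}"
  have VY: "V \<subseteq> topspace Y" using connected_components_of_subset V unfolding Y_def by blast
  have VR: "V \<subseteq> R" "\<forall>x\<in>V. p x \<in> U" using VY unfolding Y_def by (auto simp: topspace_Ls)
  have tX: "topspace X = W" unfolding X_def W_def by auto
  have tY: "topspace Y = {x\<in>R. p x \<in> U}" unfolding Y_def by (auto simp: topspace_Ls)
  have qXY: "continuous_map X Y q"
    unfolding X_def Y_def
  proof (intro continuous_map_into_subtopology continuous_map_from_subtopology q_cont)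
    show "q \<in> topspace (subtopology L W) \<rightarrow> {x \<in> topspace Ls. p x \<in> U}"
    proof
      fix x assume "x \<in> topspace (subtopology L W)"
      then have x: "x \<in> topspace L" "p x \<in> U" unfolding W_def by auto
      have "q x \<in> R" unfolding R_def using x(1) by simp
      then show "q x \<in> {x \<in> topspace Ls. p x \<in> U}" using x q_p topspace_Ls by simp
    qed
  qed
  have TP: "trace p mus V w = trace p mu P w" for w
    unfolding trace_def
  proof (rule trace_group)
    show "finite {x\<in>P. p x = w}" by (rule finite_subset[OF _ fib_finite[of w]]) (auto simp: P_def)
    show "finite {x\<in>V. p x = w}" by (rule finite_subset[OF _ fib_finite[of w]]) (use VR R_sub in auto)
    show "q ` {x\<in>P. p x = w} \<subseteq> {x\<in>V. p x = w}" unfolding P_def using q_p by auto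
    fix x' assume x': "x' \<in> {x\<in>V. p x = w}"
    show "{x\<in>{x\<in>P. p x = w}. q x = x'} = {x\<in>topspace L. q x = x'}"
    proof (rule set_eqI, rule iffI)
      fix x assume "x \<in> {x\<in>topspace L. q x = x'}"
      then have "x \<in> topspace L" "q x = x'" by auto
      then show "x \<in> {x\<in>{x\<in>P. p x = w}. q x = x'}" using x' q_p[of x] unfolding P_def by auto
    qed (auto simp: P_def)
  qed
  define Ks where "Ks = {K\<in>connected_components_of X. K \<subseteq> P}"
  have compP: "connected_component_of_set X x \<subseteq> P" if x: "x \<in> P" for x
  proof -
    have xW: "x \<in> W" using x VR unfolding P_def W_def by (auto simp: q_p)
    have cc: "connectedin Y (q ` connected_component_of_set X x)"
      using connectedin_continuous_map_image[OF qXY connectedin_connected_component_of] .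
    have "x \<in> connected_component_of_set X x" using xW tX by (simp add: connected_component_of_refl)
    then have "\<not> disjnt V (q ` connected_component_of_set X x)" using x unfolding P_def disjnt_def by auto
    then have "q ` connected_component_of_set X x \<subseteq> V"
      using connected_components_of_maximal[OF V[folded Y_def] cc] by blast
    moreover have "connected_component_of_set X x \<subseteq> topspace L"
      using connected_component_of_subset_topspace[of X x] tX unfolding W_def by auto
    ultimately show ?thesis unfolding P_def by auto
  qed
  have UKs: "P = \<Union>Ks"
  proof
    show "P \<subseteq> \<Union>Ks"
    proof
      fix x assume x: "x \<in> P"
      have xW: "x \<in> W" using x VR unfolding P_def W_def by (auto simp: q_p)
      have "connected_component_of_set X x \<in> connected_components_of X"
        using connected_component_in_connected_components_of[of X x] xW tX by blast
      then have "connected_component_of_set X x \<in> Ks"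
        unfolding Ks_def using compP[OF x] by blast
      moreover have "x \<in> connected_component_of_set X x" using xW tX by (simp add: connected_component_of_refl)
      ultimately show "x \<in> \<Union>Ks" by blast
    qed
    show "\<Union>Ks \<subseteq> P" unfolding Ks_def by auto
  qed
  have KsW: "\<forall>K\<in>Ks. K \<in> connected_components_of (subtopology L {x\<in>topspace L. p x \<in> U})"
    unfolding Ks_def X_def W_def by auto
  have Ktr: "trace p mu K y = trace p mu K z" if "K \<in> Ks" for K
    using p_comp[OF U _ yz] KsW that by blast
  have Kfin: "finite {x\<in>K. p x = w}" if "K \<in> Ks" for K w
  proof -
    have "K \<subseteq> topspace L" using that connected_components_of_subset unfolding Ks_def X_def by fastforce
    then show ?thesis by (intro finite_subset[OF _ fib_finite[of w]]) auto
  qed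
  have Kpos: "\<exists>x\<in>K. p x = y" if K: "K \<in> Ks" for K
  proof -
    obtain x0 where x0: "x0 \<in> K" using nonempty_connected_components_of K unfolding Ks_def by blast
    have x0W: "x0 \<in> W" using x0 K connected_components_of_subset tX unfolding Ks_def by blast
    then have x0t: "x0 \<in> topspace L" "p x0 \<in> U" unfolding W_def by auto
    have "mu x0 \<le> trace p mu K (p x0)" unfolding trace_def using Kfin[OF K] x0 by (intro member_le_sum) auto
    then have "0 < trace p mu K (p x0)" using wt_pos[OF x0t(1)] by simp
    moreover have "trace p mu K (p x0) = trace p mu K y" using p_comp[OF U _ x0t(2) yz(1)] KsW K by blast
    ultimately have "{x\<in>K. p x = y} \<noteq> {}" unfolding trace_def by (metis less_irrefl sum.empty)
    then show ?thesis by blast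
  qed
  have finKs: "finite Ks"
  proof -
    define ch where "ch = (\<lambda>K. SOME x. x \<in> K \<and> p x = y)"
    have ch: "ch K \<in> K \<and> p (ch K) = y" if "K \<in> Ks" for K
      unfolding ch_def using Kpos[OF that] by (metis (mono_tags, lifting) someI_ex)
    have "inj_on ch Ks"
    proof
      fix K1 K2 assume k: "K1 \<in> Ks" "K2 \<in> Ks" "ch K1 = ch K2"
      then have "\<not> disjnt K1 K2" using ch[OF k(1)] ch[OF k(2)] unfolding disjnt_def by auto
      then show "K1 = K2" using connected_components_of_disjoint k(1,2) unfolding Ks_def by blast
    qed
    moreover have "ch ` Ks \<subseteq> {x\<in>topspace L. p x = y}"
    proof
      fix w assume "w \<in> ch ` Ks"
      then obtain K where K: "K \<in> Ks" "w = ch K" by blast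
      then have "w \<in> K" "p w = y" using ch by auto
      moreover have "K \<subseteq> P" using K(1) unfolding Ks_def by blast
      ultimately show "w \<in> {x\<in>topspace L. p x = y}" unfolding P_def by auto
    qed
    then have "finite (ch ` Ks)" using fib_finite finite_subset by blast
    ultimately show ?thesis using finite_imageD by blast
  qed
  have disj: "\<forall>K1\<in>Ks. \<forall>K2\<in>Ks. K1 \<noteq> K2 \<longrightarrow> {x\<in>K1. p x = w} \<inter> {x\<in>K2. p x = w} = {}" for w
    using connected_components_of_disjoint unfolding Ks_def disjnt_def by blast
  have TS: "trace p mu P w = (\<Sum>K\<in>Ks. trace p mu K w)" for w
  proof -
    have "{x\<in>P. p x = w} = (\<Union>K\<in>Ks. {x\<in>K. p x = w})" using UKs by auto
    then show ?thesis unfolding trace_def using sum.UNION_disjoint[OF finKs _ disj[of w], of mu] Kfin by simp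
  qed
  show ?thesis using TP TS Ktr by simp
qed

lemma bc_s: "branched_covering Ls Ss Ms mus euclidean Sg fanM p"
  unfolding branched_covering_def
proof (intro conjI allI impI ballI mor_s)
  show "p ` topspace Ls = topspace euclidean"
    using p_surj unfolding topspace_Ls R_def by (auto simp: image_image q_p intro!: image_cong)
next
  fix \<sigma>' assume "\<sigma>' \<in> Ss"
  then obtain \<sigma> where s: "\<sigma> \<in> SL" "\<sigma>' = q ` \<sigma>" unfolding Ss_def by auto
  show "\<exists>\<tau>\<in>Sg. homeomorphic_map (subtopology Ls \<sigma>') (subtopology euclidean \<tau>) p"
    using qs_homeo[OF s(1)] p_homeo(1)[OF s(1)] s(2) by blast
next
  fix U V y z
  assume "openin euclidean U \<and> connectedin euclidean U \<and> V \<in> connected_components_of (subtopology Ls {x \<in> topspace Ls. p x \<in> U})"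
    "y \<in> U" "z \<in> U"
  then show "trace p mus V y = trace p mus V z" using comp_s by blast
qed

lemma tlm_s: "trop_lag_ms Sg r Ls Ss Ms mus p h"
  unfolding trop_lag_ms_def
proof (intro conjI allI ballI cc_s wt_s bc_s h_cont_s)
  fix y show "trace p mus (topspace Ls) y = r" using trace_s topspace_Ls by simp
next
  fix \<sigma>' assume "\<sigma>' \<in> Ss"
  have "gf p h 0 1 = h" unfolding gf_def by (simp add: fun_eq_iff)
  then show "zext \<sigma>' h \<in> Ms \<sigma>'" unfolding Ms_def using int_vec_0 by (metis (mono_tags, lifting) mem_Collect_eq)
qed

end

context tlm
begin

lemma sep_rays: "\<forall>\<tau>\<in>fan_cones_dim Sg 1. \<forall>\<tau>a\<in>Ss. \<forall>\<tau>b\<in>Ss.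
        \<tau>a \<noteq> \<tau>b \<and> p ` \<tau>a = \<tau> \<and> p ` \<tau>b = \<tau> \<longrightarrow>
        \<not> (\<forall>x\<in>\<tau>a. \<forall>x'\<in>\<tau>b. p x = p x' \<longrightarrow> h x = h x')"
proof (intro ballI impI notI)
  fix \<tau> \<tau>a \<tau>b
  assume t: "\<tau> \<in> fan_cones_dim Sg 1" and ab: "\<tau>a \<in> Ss" "\<tau>b \<in> Ss"
    and c: "\<tau>a \<noteq> \<tau>b \<and> p ` \<tau>a = \<tau> \<and> p ` \<tau>b = \<tau>"
    and ag: "\<forall>x\<in>\<tau>a. \<forall>x'\<in>\<tau>b. p x = p x' \<longrightarrow> h x = h x'"
  have dt: "dim \<tau> = 1" using t unfolding fan_cones_dim_def by simp
  have sub: "\<tau>1 \<subseteq> \<tau>2" if s: "\<tau>1 \<in> Ss" "\<tau>2 \<in> Ss" "p ` \<tau>1 = \<tau>" "p ` \<tau>2 = \<tau>"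
    and agr: "\<forall>x\<in>\<tau>1. \<forall>x'\<in>\<tau>2. p x = p x' \<longrightarrow> h x = h x'" for \<tau>1 \<tau>2
  proof
    obtain \<sigma>1 where s1: "\<sigma>1 \<in> SL" "\<tau>1 = q ` \<sigma>1" using s(1) unfolding Ss_def by auto
    obtain \<sigma>2 where s2: "\<sigma>2 \<in> SL" "\<tau>2 = q ` \<sigma>2" using s(2) unfolding Ss_def by auto
    fix y assume "y \<in> \<tau>1"
    then obtain z where z: "z \<in> \<sigma>1" "y = q z" using s1 by auto
    have zt: "z \<in> topspace L" using z SL_sub s1 by auto
    have "p y \<in> p ` \<tau>2" using s(3,4) \<open>y \<in> \<tau>1\<close> by auto
    then obtain x' where x': "x' \<in> \<tau>2" "p x' = p y" by auto
    then obtain z' where z': "z' \<in> \<sigma>2" "x' = q z'" using s2 by auto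
    have zt': "z' \<in> topspace L" using z' SL_sub s2 by auto
    have hh: "h y = h x'" using agr \<open>y \<in> \<tau>1\<close> x' by metis
    have "p z = p z'" using x' z z' q_p zt zt' by simp
    moreover have "h z = h z'" using hh z z' q_h zt zt' by simp
    moreover have "D z" unfolding D_def using s1 z s(3) dt p_qs[OF s1(1)] by auto
    moreover have "D z'" unfolding D_def using s2 z' s(4) dt p_qs[OF s2(1)] by auto
    ultimately have "rel z z'" unfolding rel_def using zt zt' by simp
    then have "y = q z'" using q_eq z by simp
    then show "y \<in> \<tau>2" using z' s2 by auto
  qed
  have "\<tau>a \<subseteq> \<tau>b" using sub[OF ab c[THEN conjunct2, THEN conjunct1] c[THEN conjunct2, THEN conjunct2] ag] .
  moreover have "\<tau>b \<subseteq> \<tau>a" using sub[OF ab(2,1) c[THEN conjunct2, THEN conjunct2] c[THEN conjunct2, THEN conjunct1]] ag by metis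
  ultimately show False using c by blast
qed

lemma zero_glue: assumes "z \<in> topspace L" "p z = 0" shows "D z" "h z = 0"
proof -
  obtain \<kappa> where k: "\<kappa> \<in> SL" "z \<in> cc_relint LM \<kappa>" using SL_relint[OF assms(1)] by blast
  have zk: "z \<in> \<kappa>" using k(2) unfolding cc_relint_def by auto
  have "p ` \<kappa> = {0}" using PT[OF p_homeo(1)[OF k(1)]] HD[OF k] assms(2) by simp
  then show "D z" unfolding D_def using k(1) zk by (intro bexI[of _ \<kappa>]) auto
  obtain w where "\<forall>x\<in>\<kappa>. h x = w \<bullet> p x" using PLh[OF k(1)] by blast
  then show "h z = 0" using zk assms(2) by simp
qed

lemma conn_s: "connected_space Ls"
proof -
  obtain z0 where z0: "z0 \<in> topspace L" "p z0 = 0" using p_surj by (metis UNIV_I imageE)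
  have common: "q z0 \<in> q ` \<sigma>" if s: "\<sigma> \<in> SL" for \<sigma>
  proof -
    obtain V where V: "finite V" "p ` \<sigma> = cone_of V" using Sg_cone[OF p_homeo(1)[OF s]] by blast
    have "0 \<in> p ` \<sigma>" using V cone_of_0 by simp
    then obtain z where z: "z \<in> \<sigma>" "p z = 0" by auto
    have zt: "z \<in> topspace L" using z SL_sub s by auto
    have "rel z z0" unfolding rel_def using zt z0 z zero_glue[OF zt z(2)] zero_glue[OF z0] by simp
    then have "q z0 = q z" using q_eq by simp
    then show ?thesis using z(1) by blast
  qed
  have conn: "connectedin Ls (q ` \<sigma>)" if s: "\<sigma> \<in> SL" for \<sigma>
  proof -
    obtain g where g: "continuous_map (subtopology euclidean (p ` \<sigma>)) (subtopology L \<sigma>) g"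
      "\<And>x. x \<in> \<sigma> \<Longrightarrow> g (p x) = x" "\<And>y. y \<in> p ` \<sigma> \<Longrightarrow> p (g y) = y" "\<And>y. y \<in> p ` \<sigma> \<Longrightarrow> g y \<in> \<sigma>"
      using p_inv[OF s] by blast
    obtain V where V: "finite V" "p ` \<sigma> = cone_of V" using Sg_cone[OF p_homeo(1)[OF s]] by blast
    have "connected (p ` \<sigma>)" using V cone_of_convex convex_connected by metis
    then have "connectedin (subtopology euclidean (p ` \<sigma>)) (p ` \<sigma>)" by (simp add: connectedin_subtopology)
    then have "connectedin (subtopology L \<sigma>) (g ` p ` \<sigma>)" by (rule connectedin_continuous_map_image[OF g(1)])
    moreover have "g ` p ` \<sigma> = \<sigma>" using g(2) by (auto simp: image_image intro!: image_cong[OF refl, of _ _ id, simplified] )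
    ultimately have "connectedin L \<sigma>" by (simp add: connectedin_subtopology)
    then show ?thesis by (rule connectedin_continuous_map_image[OF q_cont])
  qed
  have SLne: "SL \<noteq> {}" using z0 topspace_Union by auto
  have "topspace Ls = \<Union>((\<lambda>\<sigma>. q ` \<sigma>) ` SL)" unfolding topspace_Ls R_def using topspace_Union by auto
  moreover have "connectedin Ls (\<Union>((\<lambda>\<sigma>. q ` \<sigma>) ` SL))"
  proof (rule connectedin_Union)
    show "\<And>S. S \<in> (\<lambda>\<sigma>. q ` \<sigma>) ` SL \<Longrightarrow> connectedin Ls S" using conn by auto
    show "\<Inter>((\<lambda>\<sigma>. q ` \<sigma>) ` SL) \<noteq> {}" using common by blast
  qed
  ultimately show ?thesis using connectedin_topspace by metis
qed

lemma sep_s: "separable Sg Ls Ss p h"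
  unfolding separable_def k_separable_def using conn_s sep_rays by blast

lemma le_s: "ms_le Ls Ss Ms mus p h L SL LM mu p h"
  unfolding ms_le_def
proof (intro exI[of _ q] conjI ballI)
  show "cc_morphism L SL LM Ls Ss Ms q"
    unfolding cc_morphism_def
  proof (intro conjI ballI q_cont)
    fix \<sigma> assume s: "\<sigma> \<in> SL"
    have "q ` \<sigma> \<in> Ss" unfolding Ss_def using s by blast
    moreover have "\<forall>m\<in>Ms (q ` \<sigma>). zext \<sigma> (m \<circ> q) \<in> LM \<sigma>"
    proof
      fix m assume "m \<in> Ms (q ` \<sigma>)"
      then obtain u k where m: "m = zext (q ` \<sigma>) (gf p h u k)" "int_vec u" unfolding Ms_def by blast
      have "zext \<sigma> (m \<circ> q) = zext \<sigma> (gf p h u k)"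
        unfolding m(1) zext_def using gf_q SL_sub[OF s] by (auto simp: fun_eq_iff)
      then show "zext \<sigma> (m \<circ> q) \<in> LM \<sigma>" using gM[OF s m(2)] by simp
    qed
    ultimately show "\<exists>\<sigma>'\<in>Ss. q ` \<sigma> \<subseteq> \<sigma>' \<and> (\<forall>m\<in>Ms \<sigma>'. zext \<sigma> (m \<circ> q) \<in> LM \<sigma>)" by blast
  qed
  show "q ` topspace L = topspace Ls" unfolding topspace_Ls R_def ..
  fix x assume "x \<in> topspace L"
  then show "p (q x) = p x" "h (q x) = h x" using q_p q_h by auto
next
  fix y assume "y \<in> topspace Ls"
  show "trace q mu (topspace L) y = mus y" unfolding mus_def ..
qed

lemma le_refl_s: "ms_le Ls Ss Ms mus p h Ls Ss Ms mus p h"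
  unfolding ms_le_def
proof (intro exI[of _ "\<lambda>x. x"] conjI ballI)
  show "cc_morphism Ls Ss Ms Ls Ss Ms (\<lambda>x. x)"
    unfolding cc_morphism_def
  proof (intro conjI ballI continuous_map_id[unfolded id_def])
    fix \<sigma>' assume s: "\<sigma>' \<in> Ss"
    have "\<forall>m\<in>Ms \<sigma>'. zext \<sigma>' (m \<circ> (\<lambda>x. x)) \<in> Ms \<sigma>'"
    proof
      fix m assume m: "m \<in> Ms \<sigma>'"
      then obtain u k where "m = zext \<sigma>' (gf p h u k)" unfolding Ms_def by blast
      then have "zext \<sigma>' (m \<circ> (\<lambda>x. x)) = m" unfolding zext_def by (auto simp: fun_eq_iff)
      then show "zext \<sigma>' (m \<circ> (\<lambda>x. x)) \<in> Ms \<sigma>'" using m by simp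
    qed
    then show "\<exists>\<sigma>''\<in>Ss. (\<lambda>x. x) ` \<sigma>' \<subseteq> \<sigma>'' \<and> (\<forall>m\<in>Ms \<sigma>''. zext \<sigma>' (m \<circ> (\<lambda>x. x)) \<in> Ms \<sigma>')"
      using s by blast
  qed
  show "(\<lambda>x. x) ` topspace Ls = topspace Ls" by simp
next
  fix y assume y: "y \<in> topspace Ls"
  have "{x\<in>topspace Ls. x = y} = {y}" using y by auto
  then show "trace (\<lambda>x. x) mus (topspace Ls) y = mus y" unfolding trace_def by simp
qed auto

lemma main:
  "\<exists>(Ls::'a topology) Ss Ms \<mu>s \<pi>s \<phi>s.
           trop_lag_ms Sg r Ls Ss Ms \<mu>s \<pi>s \<phi>s \<and>
           separable Sg Ls Ss \<pi>s \<phi>s \<and>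
           ms_le Ls Ss Ms \<mu>s \<pi>s \<phi>s L SL LM mu p h \<and>
           (connected_space L \<longrightarrow> sim_c Sg r L SL LM mu p h Ls Ss Ms \<mu>s \<pi>s \<phi>s)"
proof (intro exI conjI impI)
  show "trop_lag_ms Sg r Ls Ss Ms mus p h" by (rule tlm_s)
  show "separable Sg Ls Ss p h" by (rule sep_s)
  show "ms_le Ls Ss Ms mus p h L SL LM mu p h" by (rule le_s)
  assume cL: "connected_space L"
  show "sim_c Sg r L SL LM mu p h Ls Ss Ms mus p h"
    unfolding sim_c_def using tlms cL tlm_s conn_s le_s le_refl_s by blast
qed

end

theorem proposition3p14:
  fixes \<Sigma> :: "(real^'n) set set"
    and L :: "'a topology" and SL :: "'a set set" and LM :: "'a set \<Rightarrow> ('a \<Rightarrow> real) set"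
    and \<mu> :: "'a \<Rightarrow> nat" and \<pi> :: "'a \<Rightarrow> real^'n" and \<phi> :: "'a \<Rightarrow> real" and r :: nat
  assumes "complete_fan \<Sigma>"
    and "trop_lag_ms \<Sigma> r L SL LM \<mu> \<pi> \<phi>"
  shows "\<exists>(Ls::'a topology) Ss Ms \<mu>s \<pi>s \<phi>s.
           trop_lag_ms \<Sigma> r Ls Ss Ms \<mu>s \<pi>s \<phi>s \<and>
           separable \<Sigma> Ls Ss \<pi>s \<phi>s \<and>
           ms_le Ls Ss Ms \<mu>s \<pi>s \<phi>s L SL LM \<mu> \<pi> \<phi> \<and>
           (connected_space L \<longrightarrow> sim_c \<Sigma> r L SL LM \<mu> \<pi> \<phi> Ls Ss Ms \<mu>s \<pi>s \<phi>s)"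
  proof -
  interpret tlm \<Sigma> r L SL LM \<mu> \<pi> \<phi> using assms by unfold_locales
  show ?thesis by (rule main)
qed

end
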